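(* Let $\mathcal{C}=\mathcal{I}_{\beta_1}\oplus\mathcal{I}_{\beta_2}\oplus\dots\oplus\mathcal{I}_{\beta_u}$ be a $\lambda$-constacyclic code of length $n$ over $\mathbb{F}_q$, where $0\le\beta_1<\dots<\beta_u\le s$. Then $$N_{\langle\rho\rangle}(\mathcal{C}^{*})=\sum_{\substack{\{\gamma_1,\dots,\gamma_l\}\subseteq\{1,\dots,u\}\\ l\ge1,\ \gamma_1<\dots<\gamma_l}}\frac{\prod_{i=1}^{l}(q^{d_{\beta_{\gamma_i}}}-1)\cdot\gcd(1+t\alpha_{\beta_{\gamma_1}},\dots,1+t\alpha_{\beta_{\gamma_l}},n)}{tn}.$$ Moreover, the number of distinct nonzero Hamming weights of codewords of $\mathcal{C}$ is at most $N_{\langle\rho\rangle}(\mathcal{C}^{*})$, with equality if and only if for any two nonzero codewords $c_1,c_2\in\mathcal{C}$ of the same Hamming weight there exists an integer $j$ with $\rho^{j}(c_1)=c_2$.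
   Context: Standing setup: $q$ is a prime power, $n$ a positive integer with $\gcd(n,q)=1$, $\lambda\in\mathbb{F}_q^{*}$ has multiplicative order $t$ (so $t\mid q-1$). $\mathcal{R}=\mathbb{F}_q[x]/\langle x^n-\lambda\rangle$; vectors $(c_0,\dots,c_{n-1})\in\mathbb{F}_q^n$ are identified with $c_0+c_1x+\dots+c_{n-1}x^{n-1}\in\mathcal{R}$, and a $\lambda$-constacyclic code of length $n$ is an ideal of $\mathcal{R}$. Let $\zeta$ be a primitive $tn$-th root of unity in an extension $\mathbb{F}_{q^m}$ with $\zeta^n=\lambda$, so $x^n-\lambda=\prod_{i=0}^{n-1}(x-\zeta^{1+ti})$. The set $\mathcal{S}=\{1+ti:0\le i\le n-1\}$ (residues mod $tn$) is partitioned into the distinct $q$-cyclotomic cosets modulo $tn$, $C_{1+t\alpha_j}=\{(1+t\alpha_j)q^{h}\bmod tn: h\ge 0\}$, $j=0,\dots,s$, with $0=\alpha_0<\alpha_1<\dots<\alpha_s\le n-1$ and $d_j=|C_{1+t\alpha_j}|$. Let $m_j(x)=\prod_{h\in C_{1+t\alpha_j}}(x-\zeta^{h})$ (irreducible over $\mathbb{F}_q$), and let $\mathcal{I}_j$ be the ideal of $\mathcal{R}$ generated by $(x^n-\lambda)/m_j(x)$; this is an irreducible $\lambda$-constacyclic code of dimension $d_j$, said to correspond to the coset $C_{1+t\alpha_j}$, and $\mathcal{R}=\mathcal{I}_0\oplus\dots\oplus\mathcal{I}_s$. The cyclic shift $\rho:\mathcal{R}\to\mathcal{R}$ is $\rho(c(x))=xc(x)$,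 i.e. $(c_0,\dots,c_{n-1})\mapsto(\lambda c_{n-1},c_0,\dots,c_{n-2})$; $\langle\rho\rangle$ is the cyclic group it generates, of order $tn$. $\mathcal{C}^{*}=\mathcal{C}\setminus\{0\}$, and for a group $G$ acting on a finite set $X$, $N_G(X)$ denotes the number of $G$-orbits on $X$. *)

theory Defs
  imports "HOL-Computational_Algebra.Polynomial" "HOL-Computational_Algebra.Primes" "HOL-Library.Cardinality"
begin

definition mult_ord :: "'a::field \<Rightarrow> nat" where
  "mult_ord x = (LEAST k. 0 < k \<and> x ^ k = 1)"

definition is_field_emb :: "('a::field \<Rightarrow> 'b::field) \<Rightarrow> bool" where
  "is_field_emb e \<longleftrightarrow> e 1 = 1 \<and> (\<forall>x y. e (x + y) = e x + e y) \<and> (\<forall>x y. e (x * y) = e x * e y)"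

definition prim_root :: "nat \<Rightarrow> 'b::field \<Rightarrow> bool" where
  "prim_root N z \<longleftrightarrow> z ^ N = 1 \<and> (\<forall>k. 0 < k \<and> k < N \<longrightarrow> z ^ k \<noteq> 1)"

definition cyc_coset :: "nat \<Rightarrow> nat \<Rightarrow> nat \<Rightarrow> nat set" where
  "cyc_coset q N a = {(a * q ^ h) mod N | h. True}"

(* indices alpha: 1+t*alpha is the representative of its coset with least alpha *)
definition coset_reps :: "nat \<Rightarrow> nat \<Rightarrow> nat \<Rightarrow> nat set" where
  "coset_reps q t n = {i. i < n \<and> (\<forall>i'<i. (1 + t * i') mod (t * n) \<notin> cyc_coset q (t * n) (1 + t * i))}"

definition alpha :: "nat \<Rightarrow> nat \<Rightarrow> nat \<Rightarrow> nat \<Rightarrow> nat" where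
  "alpha q t n j = sorted_list_of_set (coset_reps q t n) ! j"

(* s : cosets are indexed by 0..s *)
definition s_idx :: "nat \<Rightarrow> nat \<Rightarrow> nat \<Rightarrow> nat" where
  "s_idx q t n = card (coset_reps q t n) - 1"

definition dj :: "nat \<Rightarrow> nat \<Rightarrow> nat \<Rightarrow> nat \<Rightarrow> nat" where
  "dj q t n j = card (cyc_coset q (t * n) (1 + t * alpha q t n j))"

definition modpoly :: "nat \<Rightarrow> 'a::field \<Rightarrow> 'a poly" where
  "modpoly n lam = monom 1 n - [:lam:]"

definition mj_ext :: "nat \<Rightarrow> nat \<Rightarrow> nat \<Rightarrow> 'b::field \<Rightarrow> nat \<Rightarrow> 'b poly" where
  "mj_ext q t n z j = (\<Prod>h\<in>cyc_coset q (t * n) (1 + t * alpha q t n j). [:- (z ^ h), 1:])"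

definition mj :: "('a::field \<Rightarrow> 'b::field) \<Rightarrow> nat \<Rightarrow> nat \<Rightarrow> nat \<Rightarrow> 'b \<Rightarrow> nat \<Rightarrow> 'a poly" where
  "mj e q t n z j = (THE p. map_poly e p = mj_ext q t n z j)"

(* elements of R = F_q[x]/<x^n - lambda> are represented by their reduced
   representatives (polynomials of degree < n); the vector (c_0,...,c_{n-1})
   is the coefficient vector *)
definition Rring :: "nat \<Rightarrow> 'a::field \<Rightarrow> 'a poly set" where
  "Rring n lam = {c. c mod modpoly n lam = c}"

definition Ij :: "('a::field \<Rightarrow> 'b::field) \<Rightarrow> nat \<Rightarrow> nat \<Rightarrow> nat \<Rightarrow> 'a \<Rightarrow> 'b \<Rightarrow> nat \<Rightarrow> 'a poly set" where
  "Ij e q t n lam z j =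
     {(a * (modpoly n lam div mj e q t n z j)) mod modpoly n lam | a. True}"

(* C = I_{beta_1} + ... + I_{beta_u}, B = {beta_1,...,beta_u} *)
definition code :: "('a::field \<Rightarrow> 'b::field) \<Rightarrow> nat \<Rightarrow> nat \<Rightarrow> nat \<Rightarrow> 'a \<Rightarrow> 'b \<Rightarrow> nat set \<Rightarrow> 'a poly set" where
  "code e q t n lam z B =
     {(\<Sum>j\<in>B. c j) | c. \<forall>j\<in>B. c j \<in> Ij e q t n lam z j}"

definition rho :: "nat \<Rightarrow> 'a::field \<Rightarrow> 'a poly \<Rightarrow> 'a poly" where
  "rho n lam c = (monom 1 1 * c) mod modpoly n lam"

definition rho_orbit :: "nat \<Rightarrow> 'a::field \<Rightarrow> 'a poly \<Rightarrow> 'a poly set" where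
  "rho_orbit n lam c = {(rho n lam ^^ k) c | k. True}"

definition num_orbits :: "nat \<Rightarrow> 'a::field \<Rightarrow> 'a poly set \<Rightarrow> nat" where
  "num_orbits n lam X = card (rho_orbit n lam ` X)"

definition hweight :: "'a::zero poly \<Rightarrow> nat" where
  "hweight c = card {i. coeff c i \<noteq> 0}"

end

theory Submission
  imports Defs "HOL-Number_Theory.Cong" "HOL-Library.FuncSet"
begin


lemma emb_0: assumes "is_field_emb e" shows "e 0 = 0"
proof -
  have "e (0 + 0) = e 0 + e 0" using assms unfolding is_field_emb_def by blast
  hence h: "e 0 = e 0 + e 0" by (simp only: add_0_right)
  have "e 0 + e 0 = e 0 + 0" by (subst add_0_right) (rule h[symmetric])
  from add_left_imp_eq[OF this] show ?thesis .
qed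

lemma emb_1: "is_field_emb e \<Longrightarrow> e 1 = 1"
  unfolding is_field_emb_def by auto

lemma emb_add: "is_field_emb e \<Longrightarrow> e (x + y) = e x + e y"
  unfolding is_field_emb_def by auto

lemma emb_mult: "is_field_emb e \<Longrightarrow> e (x * y) = e x * e y"
  unfolding is_field_emb_def by auto

lemma emb_uminus: assumes "is_field_emb e" shows "e (- x) = - e x"
proof -
  have "e (- x + x) = e (- x) + e x" by (rule emb_add[OF assms])
  hence "e (- x) + e x = 0" using emb_0[OF assms] by simp
  thus ?thesis by (simp add: eq_neg_iff_add_eq_0)
qed

lemma emb_diff: assumes "is_field_emb e" shows "e (x - y) = e x - e y"
  using emb_add[OF assms, of x "-y"] emb_uminus[OF assms, of y] by simp

lemma emb_power: "is_field_emb e \<Longrightarrow> e (x ^ k) = e x ^ k"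
  by (induction k) (auto simp: emb_1 emb_mult)

lemma emb_of_nat: "is_field_emb e \<Longrightarrow> e (of_nat k) = of_nat k"
  by (induction k) (auto simp: emb_0 emb_1 emb_add)

lemma emb_sum: "is_field_emb e \<Longrightarrow> e (sum f A) = (\<Sum>x\<in>A. e (f x))"
  by (induction A rule: infinite_finite_induct) (auto simp: emb_0 emb_add)

lemma emb_inj:
  fixes e :: "'a::field \<Rightarrow> 'b::field"
  assumes "is_field_emb e" shows "inj e"
proof (rule injI)
  fix x y assume "e x = e y"
  hence "e (x - y) = 0" using emb_diff[OF assms] by simp
  show "x = y"
  proof (rule ccontr)
    assume "x \<noteq> y"
    hence "e ((x - y) * inverse (x - y)) = 1" using emb_1[OF assms] by simp
    with \<open>e (x - y) = 0\<close> show False using emb_mult[OF assms] by simp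
  qed
qed

lemma mp_add: "is_field_emb e \<Longrightarrow> map_poly e (p + q) = map_poly e p + map_poly e q"
  by (rule poly_eqI) (simp add: coeff_map_poly emb_0 emb_add)

lemma mp_diff: "is_field_emb e \<Longrightarrow> map_poly e (p - q) = map_poly e p - map_poly e q"
  by (rule poly_eqI) (simp add: coeff_map_poly emb_0 emb_diff)

lemma mp_mult: "is_field_emb e \<Longrightarrow> map_poly e (p * q) = map_poly e p * map_poly e q"
  by (rule poly_eqI) (simp add: coeff_map_poly emb_0 coeff_mult emb_sum emb_mult)

lemma mp_1: "is_field_emb e \<Longrightarrow> map_poly e 1 = 1"
  by (simp add: emb_1)

lemma mp_power: "is_field_emb e \<Longrightarrow> map_poly e (p ^ k) = map_poly e p ^ k"
  by (induction k) (auto simp: mp_1 mp_mult)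

lemma mp_sum: "is_field_emb e \<Longrightarrow> map_poly e (sum f A) = (\<Sum>x\<in>A. map_poly e (f x))"
  by (induction A rule: infinite_finite_induct) (auto simp: mp_add)

lemma mp_inj:
  fixes e :: "'a::field \<Rightarrow> 'b::field"
  assumes "is_field_emb e" shows "inj (map_poly e)"
proof (rule injI)
  fix p q :: "'a poly" assume "map_poly e p = map_poly e q"
  hence "\<And>i. e (coeff p i) = e (coeff q i)"
    by (metis assms coeff_map_poly emb_0)
  thus "p = q" using emb_inj[OF assms] by (simp add: injD poly_eqI)
qed

lemma mp_eq_0: assumes "is_field_emb e" shows "map_poly e p = 0 \<longleftrightarrow> p = 0"
proof
  assume h: "map_poly e p = 0"
  hence "map_poly e p = map_poly e 0" by simp
  thus "p = 0" by (rule injD[OF mp_inj[OF assms]])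
qed simp

lemma emb_nz: assumes "is_field_emb e" "x \<noteq> 0" shows "e x \<noteq> 0"
proof
  assume "e x = 0" hence "e x = e 0" using emb_0[OF assms(1)] by simp
  hence "x = 0" by (rule injD[OF emb_inj[OF assms(1)]])
  with assms(2) show False by simp
qed

lemma mp_degree: "is_field_emb e \<Longrightarrow> degree (map_poly e p) = degree p"
  by (rule degree_map_poly) (rule emb_nz)

lemma mp_monom: "is_field_emb e \<Longrightarrow> map_poly e (monom c k) = monom (e c) k"
  by (simp add: emb_0 map_poly_monom)

lemma mp_const: "is_field_emb e \<Longrightarrow> map_poly e [:c:] = [:e c:]"
  by (simp add: emb_0 map_poly_pCons)



lemma card_field_ge2: "CARD('a::{finite,field}) \<ge> 2"
proof -
  have "card {0::'a, 1} = 2" by simp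
  moreover have "card {0::'a, 1} \<le> CARD('a)" by (rule card_mono) auto
  ultimately show ?thesis by simp
qed

lemma fermat_field:
  fixes a :: "'a::{finite,field}"
  assumes "a \<noteq> 0"
  shows "a ^ (CARD('a) - 1) = 1"
proof -
  let ?U = "UNIV - {0::'a}"
  have cU: "card ?U = CARD('a) - 1" by (simp add: card_Diff_singleton)
  have bij: "bij_betw (\<lambda>x. a * x) ?U ?U"
    by (rule bij_betw_byWitness[where f' = "\<lambda>x. inverse a * x"]) (use assms in auto)
  have "prod (\<lambda>x. x) ?U = prod (\<lambda>x. a * x) ?U"
    using prod.reindex_bij_betw[OF bij, of "\<lambda>x. x"] by simp
  also have "\<dots> = a ^ card ?U * prod (\<lambda>x. x) ?U"
    by (simp add: prod.distrib)
  finally have "1 * prod (\<lambda>x. x) ?U = a ^ card ?U * prod (\<lambda>x. x) ?U" by simp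
  moreover have "prod (\<lambda>x. x) ?U \<noteq> 0" by simp
  ultimately have "a ^ card ?U = 1" by (metis mult_cancel_right)
  thus ?thesis using cU by simp
qed

lemma fermat_field2:
  fixes a :: "'a::{finite,field}"
  shows "a ^ CARD('a) = a"
proof (cases "a = 0")
  case True thus ?thesis using card_field_ge2[where 'a='a] by simp
next
  case False
  have "a ^ CARD('a) = a ^ (CARD('a) - 1) * a"
    using card_field_ge2[where 'a='a] by (metis One_nat_def Suc_pred' less_le_trans pos2 power_Suc2 numeral_2_eq_2 le_eq_less_or_eq)
  thus ?thesis using fermat_field[OF False] by simp
qed

lemma binom_vanish:
  fixes dummy :: "'a::{finite,field}"
  assumes "0 < k" "k < CARD('a)"
  shows "(of_nat (CARD('a) choose k) :: 'a) = 0"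
proof -
  define q where "q = CARD('a)"
  define P :: "'a poly" where "P = (\<Sum>i\<in>{1..<q}. monom (of_nat (q choose i)) i)"
  have ev: "poly P a = 0" for a :: 'a
  proof -
    have "poly P a = (\<Sum>i\<in>{1..<q}. of_nat (q choose i) * a ^ i)"
      by (simp add: P_def poly_sum poly_monom)
    moreover have "(a + 1) ^ q = (\<Sum>i\<le>q. of_nat (q choose i) * a ^ i)"
      by (simp add: binomial_ring)
    moreover have "{..q} = insert 0 (insert q {1..<q})" using card_field_ge2[where 'a='a]
      unfolding q_def by auto
    moreover have "(a + 1) ^ q = a ^ q + 1" unfolding q_def by (simp add: fermat_field2)
    ultimately show ?thesis using card_field_ge2[where 'a='a] unfolding q_def by (simp add: algebra_simps)
  qed
  have P0: "P = 0"
  proof (rule ccontr)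
    assume "P \<noteq> 0"
    hence "card {x. poly P x = 0} \<le> degree P" by (rule card_poly_roots_bound)
    moreover have "{x. poly P x = 0} = UNIV" using ev by auto
    moreover have "degree P \<le> q - 1" unfolding P_def
      by (rule degree_sum_le) (auto intro: order.trans[OF degree_monom_le])
    ultimately show False using card_field_ge2[where 'a='a] unfolding q_def by auto
  qed
  have "coeff P k = of_nat (q choose k)"
    unfolding P_def using assms by (simp add: coeff_sum coeff_monom q_def)
  thus ?thesis using P0 q_def by simp
qed

lemma frob_add:
  fixes e :: "'a::{finite,field} \<Rightarrow> 'b::field"
  assumes "is_field_emb e"
  shows "((x::'b) + y) ^ CARD('a) = x ^ CARD('a) + y ^ CARD('a)"
proof -
  define q where "q = CARD('a)"
  have bv: "(of_nat (q choose k) :: 'b) = 0" if "0 < k" "k < q" for k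
    using binom_vanish[where 'a='a, of k] that emb_of_nat[OF assms, of "q choose k"] emb_0[OF assms]
    unfolding q_def by simp
  have "(x + y) ^ q = (\<Sum>k\<le>q. of_nat (q choose k) * x ^ k * y ^ (q - k))"
    by (rule binomial_ring)
  also have "{..q} = insert 0 (insert q {1..<q})" using card_field_ge2[where 'a='a]
      unfolding q_def by auto
  also have "(\<Sum>k\<in>insert 0 (insert q {1..<q}). of_nat (q choose k) * x ^ k * y ^ (q - k))
     = y ^ q + x ^ q"
    using card_field_ge2[where 'a='a] bv unfolding q_def by simp
  finally show ?thesis unfolding q_def by simp
qed

lemma frob_mult: "((x::'b::field) * y) ^ q = x ^ q * y ^ q"
  by (simp add: power_mult_distrib)

lemma frob_sum:
  fixes e :: "'a::{finite,field} \<Rightarrow> 'b::field"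
  assumes "is_field_emb e"
  shows "(sum (f::'c \<Rightarrow> 'b) A) ^ CARD('a) = (\<Sum>x\<in>A. (f x) ^ CARD('a))"
proof -
  have z: "(0::'b) ^ CARD('a) = 0" using card_field_ge2[where 'a='a] by simp
  show ?thesis
    by (induction A rule: infinite_finite_induct) (auto simp: frob_add[OF assms] z)
qed

lemma fixed_in_range:
  fixes e :: "'a::{finite,field} \<Rightarrow> 'b::field"
  assumes "is_field_emb e" and "x ^ CARD('a) = x"
  shows "x \<in> range e"
proof -
  define q where "q = CARD('a)"
  define P :: "'b poly" where "P = monom 1 q - [:0, 1:]"
  have q2: "q \<ge> 2" unfolding q_def by (rule card_field_ge2)
  have cP: "coeff P q = 1" using q2 by (simp add: P_def coeff_pCons split: nat.split)
  hence Pnz: "P \<noteq> 0" by auto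
  have dP: "degree P = q"
  proof (rule antisym)
    show "degree P \<le> q" unfolding P_def using q2
      by (intro degree_diff_le) (auto simp: degree_monom_eq)
    show "q \<le> degree P" using cP by (intro le_degree) simp
  qed
  have roots: "{z. poly P z = 0} = {z. z ^ q = z}" by (auto simp: P_def poly_monom)
  have "range e \<subseteq> {z. z ^ q = z}"
  proof
    fix z assume "z \<in> range e"
    then obtain a where "z = e a" by auto
    thus "z \<in> {z. z ^ q = z}" using fermat_field2[of a] emb_power[OF assms(1), of a q]
      unfolding q_def by simp
  qed
  moreover have "card (range e) = q" unfolding q_def
    using card_image[OF emb_inj[OF assms(1)]] by simp
  moreover have fin: "finite {z::'b. z ^ q = z}" using poly_roots_finite[OF Pnz] unfolding roots .
  moreover have "card {z::'b. z ^ q = z} \<le> q" using card_poly_roots_bound[OF Pnz] unfolding dP roots .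
  ultimately have "range e = {z. z ^ q = z}"
    by (intro card_subset_eq) (auto intro: antisym card_mono)
  thus ?thesis using assms(2) unfolding q_def by auto
qed



locale cst =
  fixes lam :: "'a::{finite,field}" and e :: "'a \<Rightarrow> 'b::{finite,field}" and z :: 'b
    and q n t :: nat
  assumes hq: "q = CARD('a)" and hn: "0 < n" and hcop: "coprime n q"
    and hlam: "lam \<noteq> 0" and ht: "t = mult_ord lam" and he: "is_field_emb e"
    and hz: "prim_root (t * n) z" and hzn: "z ^ n = e lam"
begin

lemma q2: "q \<ge> 2" using card_field_ge2[where 'a='a] hq by simp

lemma t_props: "0 < t \<and> lam ^ t = 1 \<and> t dvd (q - 1)"
proof -
  have ex: "0 < q - 1 \<and> lam ^ (q-1) = 1" using fermat_field[OF hlam] hq q2 by simp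
  have P: "0 < t \<and> lam ^ t = 1" unfolding ht mult_ord_def by (rule LeastI_ex) (use ex in blast)
  have "t dvd (q - 1)"
  proof -
    define k where "k = q - 1"
    have "lam ^ k = lam ^ (t * (k div t) + k mod t)" by simp
    also have "\<dots> = (lam ^ t) ^ (k div t) * lam ^ (k mod t)" by (simp only: power_add power_mult)
    finally have "lam ^ (k mod t) = 1" using P ex k_def by simp
    moreover have "k mod t < t" using P by simp
    ultimately have "k mod t = 0"
      using not_less_Least[of "k mod t" "\<lambda>k. 0 < k \<and> lam ^ k = 1"] unfolding ht mult_ord_def
      by auto
    thus ?thesis unfolding k_def by (simp add: dvd_eq_mod_eq_0)
  qed
  with P show ?thesis by simp
qed

lemma t_pos: "0 < t" using t_props by simp

lemma N_pos: "0 < t * n" using t_pos hn by simp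

lemma q_cong_1: "[q = 1] (mod t)"
proof -
  have "[q - 1 = 0] (mod t)" using t_props by (simp add: cong_0_iff)
  hence "[q - 1 + 1 = 0 + 1] (mod t)" by (rule cong_add) simp
  thus ?thesis using q2 by simp
qed

lemma coprime_qt: "coprime q t"
proof -
  have "gcd t q dvd q - 1" using t_props by (meson dvd_trans gcd_dvd1)
  moreover have "gcd t q dvd q" by simp
  ultimately have "gcd t q dvd q - (q - 1)" by (rule dvd_diff_nat[rotated])
  hence "gcd t q dvd 1" using q2 by simp
  hence "gcd t q = 1" by simp
  thus ?thesis by (simp add: coprime_iff_gcd_eq_1 gcd.commute)
qed

lemma coprime_qN: "coprime q (t * n)"
  using coprime_qt hcop by (simp add: coprime_commute)

lemma zN: "z ^ (t * n) = 1" using hz unfolding prim_root_def by simp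

lemma z_mod: "z ^ k = z ^ (k mod (t * n))"
proof -
  have "z ^ k = z ^ ((t * n) * (k div (t * n)) + k mod (t * n))" by simp
  also have "\<dots> = (z ^ (t * n)) ^ (k div (t * n)) * z ^ (k mod (t * n))"
    by (simp only: power_add power_mult[of z "t * n"])
  also have "\<dots> = z ^ (k mod (t * n))" using zN by simp
  finally show ?thesis .
qed

lemma z_one_iff: "z ^ k = 1 \<longleftrightarrow> (t * n) dvd k"
proof
  assume h: "z ^ k = 1"
  have "k mod (t * n) < t * n" using N_pos by simp
  moreover have "z ^ (k mod (t * n)) = 1" using h z_mod by simp
  ultimately have "k mod (t * n) = 0" using hz unfolding prim_root_def by auto
  thus "(t * n) dvd k" by (simp add: dvd_eq_mod_eq_0)
next
  assume "(t * n) dvd k"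
  have "z ^ k = z ^ (k mod (t * n))" by (rule z_mod)
  thus "z ^ k = 1" using \<open>(t * n) dvd k\<close> by (simp add: dvd_eq_mod_eq_0)
qed

lemma z_nz: "z \<noteq> 0" using zN N_pos by (metis power_0_left less_not_refl2 zero_neq_one)

lemma z_eq: assumes "a < t * n" "b < t * n" "z ^ a = z ^ b" shows "a = b"
proof -
  have *: "x = y" if "x \<le> y" "y < t * n" "z ^ x = z ^ y" for x y
  proof -
    have "z ^ y = z ^ x * z ^ (y - x)" using that(1) by (simp add: power_add[symmetric])
    hence "z ^ (y - x) = 1" using that(3) z_nz by simp
    hence "(t * n) dvd (y - x)" using z_one_iff by simp
    moreover have "y - x < t * n" using that by simp
    ultimately have "y - x = 0" by (metis dvd_imp_le not_less zero_less_iff_neq_zero)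
    thus ?thesis using that by simp
  qed
  show ?thesis using *[of a b] *[of b a] assms by (cases "a \<le> b") auto
qed

lemma q_period: "\<exists>r>0. [q ^ r = 1] (mod (t * n))"
proof -
  have "\<not> inj (\<lambda>i. q ^ i mod (t * n))"
  proof
    assume "inj (\<lambda>i. q ^ i mod (t * n))"
    hence "infinite (range (\<lambda>i. q ^ i mod (t * n)))"
      by (simp add: finite_image_iff)
    moreover have "range (\<lambda>i. q ^ i mod (t * n)) \<subseteq> {..<t * n}" using N_pos by auto
    ultimately show False using finite_subset by blast
  qed
  then obtain i j where ij: "i \<noteq> j" "q ^ i mod (t * n) = q ^ j mod (t * n)"
    unfolding inj_def by auto
  have main: "\<exists>r>0. [q ^ r = 1] (mod (t * n))"
    if "i < j" "q ^ i mod (t * n) = q ^ j mod (t * n)" for i j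
  proof -
    have "[q ^ i * q ^ (j - i) = q ^ i * 1] (mod (t * n))"
      using that by (simp add: cong_def power_add[symmetric])
    hence "[q ^ (j - i) = 1] (mod (t * n))"
      by (subst (asm) cong_mult_lcancel_nat) (use coprime_qN in auto)
    thus ?thesis using that by (intro exI[of _ "j - i"]) auto
  qed
  show ?thesis using ij main[of i j] main[of j i] by (cases "i < j") auto
qed

abbreviation "Cs a \<equiv> cyc_coset q (t * n) a"

definition S :: "nat set" where "S = {h. h < t * n \<and> [h = 1] (mod t)}"

lemma Cs_finite: "finite (Cs a)" and Cs_sub: "Cs a \<subseteq> {..<t * n}"
proof -
  show "Cs a \<subseteq> {..<t * n}" unfolding cyc_coset_def using N_pos by auto
  thus "finite (Cs a)" using finite_subset by blast
qed

lemma Cs_self: "a mod (t * n) \<in> Cs a"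
  unfolding cyc_coset_def by (auto intro: exI[of _ 0])

lemma Cs_dvd: assumes "h \<in> Cs a" shows "(t * n) dvd h * k \<longleftrightarrow> (t * n) dvd a * k"
proof -
  obtain i where h: "h = (a * q ^ i) mod (t * n)" using assms unfolding cyc_coset_def by auto
  have "(t * n) dvd h * k \<longleftrightarrow> (t * n) dvd (a * q ^ i) * k"
    unfolding h by (simp add: dvd_eq_mod_eq_0 mod_mult_left_eq)
  also have "\<dots> \<longleftrightarrow> (t * n) dvd (a * k) * q ^ i" by (simp add: ac_simps)
  also have "\<dots> \<longleftrightarrow> (t * n) dvd a * k"
    by (rule coprime_dvd_mult_left_iff) (use coprime_qN in \<open>simp add: coprime_commute\<close>)
  finally show ?thesis .
qed

lemma Cs_meet: assumes "x \<in> Cs a" "x \<in> Cs b" shows "a mod (t * n) \<in> Cs b"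
proof -
  obtain u where u: "x = (a * q ^ u) mod (t * n)"
    using assms(1) unfolding cyc_coset_def by auto
  obtain v where v: "x = (b * q ^ v) mod (t * n)"
    using assms(2) unfolding cyc_coset_def by auto
  note uv = u v
  obtain r where r: "r > 0" "[q ^ r = 1] (mod (t * n))" using q_period by blast
  have c1: "[a * q ^ u = b * q ^ v] (mod (t * n))" using uv by (simp add: cong_def)
  hence c2: "[a * q ^ u * q ^ (u * (r - 1)) = b * q ^ v * q ^ (u * (r - 1))] (mod (t * n))"
    by (rule cong_mult) simp
  have eq: "a * q ^ u * q ^ (u * (r - 1)) = a * (q ^ r) ^ u"
    using r(1) by (simp add: power_add[symmetric] power_mult[symmetric] algebra_simps)
  have e1: "[a * (q ^ r) ^ u = a * 1 ^ u] (mod (t * n))"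
    by (intro cong_mult cong_pow r(2)) simp
  hence "[a = a * (q ^ r) ^ u] (mod (t * n))" by (simp add: cong_sym_eq)
  hence "[a = a * q ^ u * q ^ (u * (r - 1))] (mod (t * n))" by (simp only: eq)
  hence "[a = b * q ^ v * q ^ (u * (r - 1))] (mod (t * n))" using c2 by (rule cong_trans)
  hence "[a = b * q ^ (v + u * (r - 1))] (mod (t * n))" by (simp add: power_add mult.assoc)
  thus ?thesis unfolding cyc_coset_def by (auto simp: cong_def)
qed

lemma Cs_sub_S: assumes "[a = 1] (mod t)" shows "Cs a \<subseteq> S"
proof
  fix h assume "h \<in> Cs a"
  then obtain i where h: "h = (a * q ^ i) mod (t * n)" unfolding cyc_coset_def by auto
  have "[a * q ^ i = 1 * 1 ^ i] (mod t)"
    by (intro cong_mult cong_pow assms q_cong_1)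
  moreover have "h mod t = (a * q ^ i) mod t" unfolding h by (simp add: mod_mod_cancel)
  ultimately have "[h = 1] (mod t)" by (simp add: cong_def)
  thus "h \<in> S" unfolding S_def using h N_pos by simp
qed

lemma S_root: assumes "h \<in> S" shows "z ^ (h * n) = z ^ n"
proof -
  have "(h * n) mod (t * n) = (h mod t) * n" by (rule mod_mult_mult2)
  also have "\<dots> = (1 mod t) * n" using assms unfolding S_def cong_def by simp
  also have "\<dots> = (1 * n) mod (t * n)" by (rule mod_mult_mult2[symmetric])
  finally show ?thesis using z_mod by (metis mult_1)
qed

lemma card_S: "card S = n"
proof -
  define r where "r = 1 mod t"
  have r: "r < t" using t_pos unfolding r_def by simp
  have "S = (\<lambda>i. t * i + r) ` {..<n}"
  proof (intro set_eqI iffI)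
    fix h assume "h \<in> S"
    hence h: "h < t * n" "h mod t = r" unfolding S_def cong_def r_def by auto
    have "h = t * (h div t) + r" using h(2) by (metis mult_div_mod_eq)
    moreover have "h div t < n" using h(1) t_pos by (simp add: div_less_iff_less_mult mult.commute)
    ultimately show "h \<in> (\<lambda>i. t * i + r) ` {..<n}" by blast
  next
    fix h assume "h \<in> (\<lambda>i. t * i + r) ` {..<n}"
    then obtain i where i: "i < n" "h = t * i + r" by auto
    have "t * i + r < t * n"
    proof -
      have "t * i + r < t * i + t" using r by simp
      also have "\<dots> = t * (i + 1)" by simp
      also have "\<dots> \<le> t * n" using i(1) by (intro mult_le_mono2) simp
      finally show ?thesis .
    qed
    moreover have "(t * i + r) mod t = 1 mod t" using r unfolding r_def by simp
    ultimately show "h \<in> S" unfolding S_def cong_def using i by simp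
  qed
  moreover have "inj_on (\<lambda>i. t * i + r) {..<n}" using t_pos by (auto simp: inj_on_def)
  ultimately show ?thesis by (simp add: card_image)
qed

lemma S_sub: "S \<subseteq> {..<t * n}" unfolding S_def by auto

abbreviation "R \<equiv> coset_reps q t n"

lemma R_finite: "finite R" unfolding coset_reps_def by auto

lemma R_0: "0 \<in> R" unfolding coset_reps_def using hn by auto

abbreviation "s \<equiv> s_idx q t n"

lemma s_lt: "j \<le> s \<Longrightarrow> j < card R"
  using R_0 R_finite card_gt_0_iff[of R] unfolding s_idx_def by auto

lemma alpha_R: "j \<le> s \<Longrightarrow> alpha q t n j \<in> R"
  unfolding alpha_def using s_lt[of j] R_finite
  by (metis distinct_card distinct_sorted_list_of_set nth_mem set_sorted_list_of_set)

lemma alpha_inj: "j \<le> s \<Longrightarrow> j' \<le> s \<Longrightarrow> alpha q t n j = alpha q t n j' \<Longrightarrow> j = j'"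
  unfolding alpha_def using s_lt[of j] s_lt[of j'] R_finite
  by (metis distinct_card distinct_sorted_list_of_set nth_eq_iff_index_eq set_sorted_list_of_set)

abbreviation "aa j \<equiv> 1 + t * alpha q t n j"

lemma aa_cong: "[aa j = 1] (mod t)" by (metis cong_def mod_mult_self2 mult.commute)

lemma coprime_aa: "coprime (aa j) t"
proof -
  have "gcd (aa j) t dvd aa j" "gcd (aa j) t dvd t * alpha q t n j" by auto
  hence "gcd (aa j) t dvd 1" by (metis add_diff_cancel_right' dvd_diff_nat)
  thus ?thesis by (simp add: coprime_iff_gcd_eq_1)
qed

lemma Cs_disj: assumes "j \<le> s" "j' \<le> s" "j \<noteq> j'" shows "Cs (aa j) \<inter> Cs (aa j') = {}"
proof (rule ccontr)
  assume "Cs (aa j) \<inter> Cs (aa j') \<noteq> {}"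
  then obtain x where x: "x \<in> Cs (aa j)" "x \<in> Cs (aa j')" by auto
  have neq: "alpha q t n j \<noteq> alpha q t n j'" using alpha_inj assms by blast
  have c: False if "alpha q t n k < alpha q t n k'" "k' \<le> s" "aa k mod (t * n) \<in> Cs (aa k')" for k k'
    using alpha_R[OF that(2)] that(1,3) unfolding coset_reps_def by auto
  show False
  proof (cases "alpha q t n j < alpha q t n j'")
    case True thus ?thesis using c[of j j'] Cs_meet[OF x] assms by blast
  next
    case False
    hence "alpha q t n j' < alpha q t n j" using neq by simp
    thus ?thesis using c[of j' j] Cs_meet[OF x(2,1)] assms by blast
  qed
qed

end


lemma prod_lin_dvd:
  fixes p :: "'b::field poly"
  assumes "finite A" "inj_on f A" "\<forall>x\<in>A. poly p (f x) = 0"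
  shows "(\<Prod>x\<in>A. [:- f x, 1:]) dvd p"
  using assms
proof (induction A arbitrary: p rule: finite_induct)
  case empty thus ?case by simp
next
  case (insert x A)
  have "[:- f x, 1:] dvd p" using insert.prems by (simp add: dvd_iff_poly_eq_0)
  then obtain p' where p': "p = [:- f x, 1:] * p'" by (elim dvdE)
  have "\<forall>y\<in>A. poly p' (f y) = 0"
  proof
    fix y assume y: "y \<in> A"
    have "f y \<noteq> f x" using insert.prems(1) insert.hyps(2) y by (auto simp: inj_on_def)
    moreover have "poly p (f y) = 0" using insert.prems(2) y by auto
    ultimately show "poly p' (f y) = 0" using p' by simp
  qed
  hence "(\<Prod>x\<in>A. [:- f x, 1:]) dvd p'" using insert.IH insert.prems(1) by (auto simp: inj_on_def)
  thus ?case unfolding prod.insert[OF insert.hyps] p' by (rule mult_dvd_mono[OF dvd_refl])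
qed

lemma mp_prod: "is_field_emb e \<Longrightarrow> map_poly e (prod f A) = (\<Prod>x\<in>A. map_poly e (f x))"
  by (induction A rule: infinite_finite_induct) (auto simp: mp_mult mp_1)

lemma frob_emb:
  fixes e :: "'a::{finite,field} \<Rightarrow> 'b::field"
  assumes "is_field_emb e"
  shows "is_field_emb (\<lambda>x::'b. x ^ CARD('a))"
  unfolding is_field_emb_def using frob_add[OF assms] by (simp add: power_mult_distrib)

lemma card_deg_less:
  assumes "d > 0"
  shows "card {p :: 'a::{finite,zero} poly. degree p < d} = CARD('a) ^ d"
proof -
  have h1: "\<forall>p\<in>{p :: 'a poly. degree p < d}. Poly (map (coeff p) [0..<d]) = p"
  proof
    fix p :: "'a poly" assume "p \<in> {p. degree p < d}"
    hence dp: "degree p < d" by simp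
    show "Poly (map (coeff p) [0..<d]) = p"
    proof (rule poly_eqI)
      fix i
      show "coeff (Poly (map (coeff p) [0..<d])) i = coeff p i"
        using dp by (auto simp: nth_default_def coeff_eq_0)
    qed
  qed
  have h2: "\<forall>xs\<in>{xs. set xs \<subseteq> (UNIV::'a set) \<and> length xs = d}. map (coeff (Poly xs)) [0..<d] = xs"
    by (auto intro!: nth_equalityI simp: nth_default_def)
  have h3: "(\<lambda>p. map (coeff p) [0..<d]) ` {p :: 'a poly. degree p < d} \<subseteq> {xs. set xs \<subseteq> UNIV \<and> length xs = d}"
    by auto
  have h4: "Poly ` {xs. set xs \<subseteq> UNIV \<and> length xs = d} \<subseteq> {p :: 'a poly. degree p < d}"
  proof
    fix p assume "p \<in> Poly ` {xs :: 'a list. set xs \<subseteq> UNIV \<and> length xs = d}"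
    then obtain xs :: "'a list" where xs: "length xs = d" "p = Poly xs" by auto
    have "coeff p i = 0" if "i \<ge> d" for i using xs that by (simp add: nth_default_def)
    hence "degree p \<le> d - 1" using assms by (intro degree_le) auto
    thus "p \<in> {p. degree p < d}" using assms by simp
  qed
  have "bij_betw (\<lambda>p. map (coeff p) [0..<d]) {p :: 'a poly. degree p < d}
          {xs. set xs \<subseteq> UNIV \<and> length xs = d}"
    by (rule bij_betw_byWitness[OF h1 h2 h3 h4])
  hence "card {p :: 'a poly. degree p < d} = card {xs. set xs \<subseteq> (UNIV :: 'a set) \<and> length xs = d}"
    by (rule bij_betw_same_card)
  thus ?thesis using card_lists_length_eq[of "UNIV::'a set" d] by simp
qed

context cst
begin

abbreviation "M \<equiv> modpoly n lam"

definition ev :: "'a poly \<Rightarrow> nat \<Rightarrow> 'b" where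
  "ev c h = poly (map_poly e c) (z ^ h)"

lemma map_M: "map_poly e M = monom 1 n - [:z ^ n:]"
  unfolding modpoly_def by (simp add: mp_diff[OF he] mp_monom[OF he] mp_const[OF he] emb_1[OF he] hzn)

lemma M_root: "h \<in> S \<Longrightarrow> poly (map_poly e M) (z ^ h) = 0"
  unfolding map_M by (simp add: poly_monom power_mult[symmetric] S_root)

lemma deg_M: "degree M = n"
proof -
  have "degree (monom (1::'a) n - [:lam:]) = n"
  proof (rule antisym)
    show "degree (monom (1::'a) n - [:lam:]) \<le> n"
      by (intro degree_diff_le) (auto simp: degree_monom_eq)
    show "n \<le> degree (monom (1::'a) n - [:lam:])" using hn by (intro le_degree) (cases n, auto)
  qed
  thus ?thesis unfolding modpoly_def .
qed

lemma M_nz: "M \<noteq> 0" using deg_M hn by auto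

lemma ev_add: "ev (c + d) h = ev c h + ev d h" unfolding ev_def by (simp add: mp_add[OF he])
lemma ev_diff: "ev (c - d) h = ev c h - ev d h" unfolding ev_def by (simp add: mp_diff[OF he])
lemma ev_mult: "ev (c * d) h = ev c h * ev d h" unfolding ev_def by (simp add: mp_mult[OF he])
lemma ev_sum: "ev (sum f A) h = (\<Sum>x\<in>A. ev (f x) h)" unfolding ev_def by (simp add: mp_sum[OF he] poly_sum)
lemma ev_0: "ev 0 h = 0" unfolding ev_def by simp

lemma Rring_deg: assumes "c mod M = c" "c \<noteq> 0" shows "degree c < n"
  using degree_mod_less[OF M_nz, of c] assms deg_M by simp

lemma ev_inj: assumes "c mod M = c" "\<forall>h\<in>S. ev c h = 0" shows "c = 0"
proof (rule ccontr)
  assume c0: "c \<noteq> 0"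
  define p where "p = map_poly e c"
  have p0: "p \<noteq> 0" using c0 mp_eq_0[OF he] unfolding p_def by simp
  have dp: "degree p < n" using Rring_deg[OF assms(1) c0] mp_degree[OF he] unfolding p_def by simp
  have "(\<lambda>h. z ^ h) ` S \<subseteq> {x. poly p x = 0}" using assms(2) unfolding ev_def p_def by auto
  hence "card ((\<lambda>h. z ^ h) ` S) \<le> card {x. poly p x = 0}"
    by (intro card_mono poly_roots_finite p0)
  also have "\<dots> \<le> degree p" by (rule card_poly_roots_bound[OF p0])
  also have "card ((\<lambda>h. z ^ h) ` S) = card S"
    by (intro card_image inj_onI) (use S_sub z_eq in auto)
  finally show False using card_S dp by simp
qed

lemma ev_rho: assumes "h \<in> S" shows "ev (rho n lam c) h = z ^ h * ev c h"
proof -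
  have "rho n lam c = monom 1 1 * c - (monom 1 1 * c) div M * M"
    unfolding rho_def by (simp add: minus_div_mult_eq_mod)
  hence "ev (rho n lam c) h = ev (monom 1 1) h * ev c h - ev ((monom 1 1 * c) div M) h * ev M h"
    by (simp add: ev_diff ev_mult)
  moreover have "ev M h = 0" using M_root[OF assms] unfolding ev_def .
  moreover have "ev (monom 1 1) h = z ^ h" unfolding ev_def by (simp add: mp_monom[OF he] emb_1[OF he] poly_monom)
  ultimately show ?thesis by simp
qed

lemma ev_rho_pow: assumes "h \<in> S" shows "ev ((rho n lam ^^ k) c) h = z ^ (h * k) * ev c h"
  by (induction k) (auto simp: ev_rho[OF assms] power_add power_mult)

lemma rho_R: "rho n lam c mod M = rho n lam c"
  unfolding rho_def by simp

lemma rho_pow_R: "c mod M = c \<Longrightarrow> (rho n lam ^^ k) c mod M = (rho n lam ^^ k) c"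
  by (induction k) (simp_all add: rho_R)

lemma rho_add: "rho n lam (c + d) = rho n lam c + rho n lam d"
  unfolding rho_def by (simp add: distrib_left poly_mod_add_left)

lemma rho_pow_sum: "(rho n lam ^^ k) (sum f A) = (\<Sum>x\<in>A. (rho n lam ^^ k) (f x))"
proof (induction k)
  case 0 thus ?case by simp
next
  case (Suc k)
  have r0: "rho n lam 0 = 0" unfolding rho_def by simp
  have "rho n lam (sum g B) = (\<Sum>x\<in>B. rho n lam (g x))" for g :: "'c \<Rightarrow> 'a poly" and B
    by (induction B rule: infinite_finite_induct) (auto simp: rho_add r0)
  thus ?case using Suc by simp
qed

end


context cst
begin

abbreviation "Cj j \<equiv> Cs (aa j)"
abbreviation "mx j \<equiv> mj_ext q t n z j"

lemma mx_def': "mx j = (\<Prod>h\<in>Cj j. [:- (z ^ h), 1:])"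
  unfolding mj_ext_def ..

lemma sigma_bij: "bij_betw (\<lambda>h. (h * q) mod (t * n)) (Cs a) (Cs a)"
proof -
  let ?f = "\<lambda>h. (h * q) mod (t * n)"
  have img: "?f ` Cs a \<subseteq> Cs a"
  proof
    fix x assume "x \<in> ?f ` Cs a"
    then obtain h where h: "h \<in> Cs a" "x = ?f h" by auto
    then obtain i where i: "h = (a * q ^ i) mod (t * n)" unfolding cyc_coset_def by auto
    have "x = ((a * q ^ i) mod (t * n) * q) mod (t * n)" using h(2) i by simp
    also have "\<dots> = (a * q ^ i * q) mod (t * n)" by (rule mod_mult_left_eq)
    also have "\<dots> = (a * q ^ Suc i) mod (t * n)" by (simp only: mult.assoc power_Suc2)
    finally have "x = (a * q ^ Suc i) mod (t * n)" .
    thus "x \<in> Cs a" unfolding cyc_coset_def by blast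
  qed
  have inj: "inj_on ?f (Cs a)"
  proof (rule inj_onI)
    fix x y assume xy: "x \<in> Cs a" "y \<in> Cs a" "?f x = ?f y"
    hence "[x * q = y * q] (mod (t * n))" by (simp add: cong_def)
    hence "[x = y] (mod (t * n))" using coprime_qN by (simp add: cong_mult_rcancel_nat)
    moreover have "x < t * n" "y < t * n" using xy(1,2) Cs_sub[of a] by auto
    ultimately show "x = y" by (simp add: cong_def)
  qed
  have "?f ` Cs a = Cs a"
    by (rule card_subset_eq[OF Cs_finite img]) (simp add: card_image[OF inj])
  thus ?thesis using inj by (simp add: bij_betw_def)
qed

lemma mx_frob: "map_poly (\<lambda>x. x ^ q) (mx j) = mx j"
proof -
  have fe: "is_field_emb (\<lambda>x::'b. x ^ q)" using frob_emb[OF he] hq by simp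
  have "map_poly (\<lambda>x. x ^ q) (mx j) = (\<Prod>h\<in>Cj j. map_poly (\<lambda>x. x ^ q) [:- (z ^ h), 1:])"
    unfolding mx_def' by (rule mp_prod[OF fe])
  also have "\<dots> = (\<Prod>h\<in>Cj j. [:- (z ^ ((h * q) mod (t * n))), 1:])"
  proof (rule prod.cong[OF refl])
    fix h
    have "map_poly (\<lambda>x. x ^ q) [:- (z ^ h), 1:] = [:(- (z ^ h)) ^ q, 1 ^ q:]"
      using emb_0[OF fe] by (simp add: map_poly_pCons)
    also have "(- (z ^ h)) ^ q = - (z ^ (h * q))"
      using emb_uminus[OF fe, of "z ^ h"] by (simp add: power_mult)
    also have "z ^ (h * q) = z ^ ((h * q) mod (t * n))" by (rule z_mod)
    finally show "map_poly (\<lambda>x. x ^ q) [:- (z ^ h), 1:] = [:- (z ^ ((h * q) mod (t * n))), 1:]"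
      by simp
  qed
  also have "\<dots> = mx j"
    unfolding mx_def' by (rule prod.reindex_bij_betw[OF sigma_bij])
  finally show ?thesis .
qed

lemma mx_exists: "\<exists>p. map_poly e p = mx j"
proof -
  have fix_c: "(coeff (mx j) i) ^ CARD('a) = coeff (mx j) i" for i
  proof -
    have "coeff (map_poly (\<lambda>x. x ^ q) (mx j)) i = (coeff (mx j) i) ^ q"
      using q2 by (simp add: coeff_map_poly)
    thus ?thesis using mx_frob hq by simp
  qed
  have inv0: "inv e 0 = 0"
    using inv_f_f[OF emb_inj[OF he], of 0] emb_0[OF he] by simp
  have "map_poly e (map_poly (inv e) (mx j)) = map_poly (e \<circ> inv e) (mx j)"
    by (rule map_poly_map_poly) (use emb_0[OF he] inv0 in auto)
  also have "\<dots> = mx j"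
  proof (rule poly_eqI)
    fix i
    have "coeff (mx j) i \<in> range e" using fixed_in_range[OF he fix_c] by blast
    hence "e (inv e (coeff (mx j) i)) = coeff (mx j) i" by (simp add: f_inv_into_f)
    thus "coeff (map_poly (e \<circ> inv e) (mx j)) i = coeff (mx j) i"
      using emb_0[OF he] inv0 by (simp add: coeff_map_poly)
  qed
  finally show ?thesis by blast
qed

abbreviation "mm j \<equiv> mj e q t n z j"

lemma map_mm: "map_poly e (mm j) = mx j"
proof -
  obtain p where p: "map_poly e p = mx j" using mx_exists by blast
  have "\<exists>!p. map_poly e p = mx j"
    using p mp_inj[OF he] by (auto simp: inj_def)
  thus ?thesis unfolding mj_def by (rule theI')
qed

lemma Cj_sub_S: "Cj j \<subseteq> S" by (rule Cs_sub_S[OF aa_cong])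

lemma mx_nz: "mx j \<noteq> 0" unfolding mx_def' by (simp add: Cs_finite)

lemma deg_mx: "degree (mx j) = dj q t n j"
  unfolding mx_def' dj_def
  by (subst degree_prod_eq_sum_degree) auto

lemma deg_mm: "degree (mm j) = dj q t n j"
  using deg_mx map_mm mp_degree[OF he] by metis

lemma mm_nz: "mm j \<noteq> 0" using map_mm mx_nz by (metis map_poly_0)

lemma dj_pos: "dj q t n j > 0"
  unfolding dj_def using Cs_self[of "aa j"] Cs_finite[of "aa j"] by (auto simp: card_gt_0_iff)

lemma mx_dvd: "mx j dvd map_poly e M"
  unfolding mx_def'
proof (rule prod_lin_dvd[OF Cs_finite])
  show "inj_on (\<lambda>h. z ^ h) (Cj j)" by (rule inj_onI) (use Cs_sub z_eq in blast)
  show "\<forall>x\<in>Cj j. poly (map_poly e M) (z ^ x) = 0" using M_root Cj_sub_S by blast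
qed

abbreviation "gg j \<equiv> M div mm j"

lemma M_fact: "M = mm j * gg j \<and> map_poly e M = mx j * map_poly e (gg j)"
proof -
  obtain G where G: "map_poly e M = mx j * G" using mx_dvd[of j] by (elim dvdE)
  define r where "r = M mod mm j"
  have dm: "gg j * mm j + r = M" unfolding r_def by (rule div_mult_mod_eq)
  hence "map_poly e (gg j) * mx j + map_poly e r = mx j * G"
    using G by (metis map_mm mp_add[OF he] mp_mult[OF he])
  hence eq: "map_poly e r = mx j * (G - map_poly e (gg j))" by (simp add: algebra_simps)
  have r0: "r = 0"
  proof (rule ccontr)
    assume "r \<noteq> 0"
    hence "degree r < degree (mm j)" using degree_mod_less[OF mm_nz, of M] unfolding r_def by auto
    hence dlt: "degree (map_poly e r) < degree (mx j)" using deg_mm deg_mx mp_degree[OF he] by simp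
    have "map_poly e r \<noteq> 0" using \<open>r \<noteq> 0\<close> mp_eq_0[OF he] by simp
    hence "G - map_poly e (gg j) \<noteq> 0" using eq by auto
    hence "degree (map_poly e r) = degree (mx j) + degree (G - map_poly e (gg j))"
      unfolding eq by (rule degree_mult_eq[OF mx_nz])
    thus False using dlt by simp
  qed
  have "M = mm j * gg j" using dm r0 by (simp add: mult.commute)
  moreover hence "map_poly e M = mx j * map_poly e (gg j)" using map_mm mp_mult[OF he] by metis
  ultimately show ?thesis by simp
qed

lemma gg_nz: "gg j \<noteq> 0" using M_fact[of j] M_nz by auto

abbreviation "II j \<equiv> Ij e q t n lam z j"

lemma II_form: "c \<in> II j \<longleftrightarrow> (\<exists>b. degree b < dj q t n j \<and> c = b * gg j)"
proof
  assume "c \<in> II j"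
  then obtain a where a: "c = (a * gg j) mod M" unfolding Ij_def by auto
  have "c = (a * gg j) mod (mm j * gg j)"
    unfolding a using arg_cong[OF M_fact[of j, THEN conjunct1], of "\<lambda>X. (a * gg j) mod X"] by simp
  also have "\<dots> = (a mod mm j) * gg j" by (rule mod_mult_mult2)
  finally have "c = (a mod mm j) * gg j" .
  moreover have "degree (a mod mm j) < dj q t n j"
    using degree_mod_less[OF mm_nz[of j], of a] deg_mm[of j] dj_pos[of j]
    by (cases "a mod mm j = 0") auto
  ultimately show "\<exists>b. degree b < dj q t n j \<and> c = b * gg j" by blast
next
  assume "\<exists>b. degree b < dj q t n j \<and> c = b * gg j"
  then obtain b where b: "degree b < dj q t n j" "c = b * gg j" by auto
  have "(b * gg j) mod M = (b * gg j) mod (mm j * gg j)"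
    using arg_cong[OF M_fact[of j, THEN conjunct1], of "\<lambda>X. (b * gg j) mod X"] by simp
  also have "\<dots> = (b mod mm j) * gg j" by (rule mod_mult_mult2)
  also have "b mod mm j = b" using b(1) deg_mm by (intro mod_poly_less) simp
  finally show "c \<in> II j" unfolding Ij_def b(2) by (auto intro!: exI[of _ b])
qed

lemma II_card: "card (II j) = q ^ dj q t n j"
proof -
  have "II j = (\<lambda>b. b * gg j) ` {b. degree b < dj q t n j}"
    using II_form by auto
  moreover have "inj_on (\<lambda>b. b * gg j) {b. degree b < dj q t n j}"
    using gg_nz by (auto simp: inj_on_def)
  ultimately have "card (II j) = card {b :: 'a poly. degree b < dj q t n j}"
    by (simp add: card_image)
  thus ?thesis using card_deg_less[OF dj_pos] hq by simp
qed

lemma II_finite: "finite (II j)"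
  using II_card dj_pos q2 card_ge_0_finite[of "II j"] by simp

lemma II_0: "0 \<in> II j" unfolding Ij_def by (auto intro!: exI[of _ 0])

lemma II_R: "c \<in> II j \<Longrightarrow> c mod M = c" unfolding Ij_def by auto

lemma II_rho: assumes "c \<in> II j" shows "rho n lam c \<in> II j"
proof -
  obtain a where a: "c = (a * gg j) mod M" using assms unfolding Ij_def by auto
  have "rho n lam c = ((monom 1 1 * a) * gg j) mod M"
    unfolding rho_def a by (simp add: mod_mult_right_eq mult.assoc)
  thus ?thesis unfolding Ij_def by blast
qed

lemma II_rho_pow: "c \<in> II j \<Longrightarrow> (rho n lam ^^ k) c \<in> II j"
  by (induction k) (auto intro: II_rho)

lemma II_ev0: assumes "c \<in> II j" "h \<in> S" "h \<notin> Cj j" shows "ev c h = 0"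
proof -
  obtain b where b: "c = b * gg j" using assms(1) II_form by blast
  have "poly (map_poly e M) (z ^ h) = 0" using M_root[OF assms(2)] .
  hence "poly (mx j) (z ^ h) * poly (map_poly e (gg j)) (z ^ h) = 0"
    using M_fact[of j] by simp
  moreover have "poly (mx j) (z ^ h) \<noteq> 0"
  proof -
    have "poly (mx j) (z ^ h) = (\<Prod>h'\<in>Cj j. z ^ h - z ^ h')" unfolding mx_def' by (simp add: poly_prod)
    moreover have "z ^ h - z ^ h' \<noteq> 0" if "h' \<in> Cj j" for h'
    proof
      assume "z ^ h - z ^ h' = 0"
      hence "h = h'" using z_eq[of h h'] assms(2) S_sub Cs_sub that by auto
      thus False using that assms(3) by simp
    qed
    ultimately show ?thesis using Cs_finite by simp
  qed
  ultimately have "poly (map_poly e (gg j)) (z ^ h) = 0" by simp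
  thus ?thesis unfolding b ev_def by (simp add: mp_mult[OF he])
qed

end


definition orb :: "('a \<Rightarrow> 'a) \<Rightarrow> 'a \<Rightarrow> 'a set" where
  "orb f c = {(f ^^ k) c | k. True}"

lemma funpow_comb: "(f ^^ m) ((f ^^ k) c) = (f ^^ (m + k)) c"
  by (simp add: funpow_add)

lemma orb_self: "c \<in> orb f c" unfolding orb_def by (auto intro!: exI[of _ 0])

lemma funpow_period: assumes "(f ^^ L) c = c" shows "(f ^^ (L * m + k)) c = (f ^^ k) c"
proof -
  have "(f ^^ (L * m)) c = c"
    by (induction m) (auto simp: funpow_add assms mult.commute[of L] simp del: funpow.simps(2)
                       simp add: funpow_Suc_right[symmetric] mult_Suc_right)
  thus ?thesis by (simp add: funpow_add add.commute[of "L * m"])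
qed

lemma orb_eq: assumes "(f ^^ L) c = c" "L > 0" shows "orb f ((f ^^ k) c) = orb f c"
proof
  show "orb f ((f ^^ k) c) \<subseteq> orb f c" unfolding orb_def by (auto simp: funpow_add[symmetric, THEN fun_cong, simplified] simp del: funpow.simps)
next
  show "orb f c \<subseteq> orb f ((f ^^ k) c)"
  proof
    fix x assume "x \<in> orb f c"
    then obtain i where i: "x = (f ^^ i) c" unfolding orb_def by auto
    have "L * k \<ge> k" using assms(2) by simp
    have ar: "L * k - k + i + k = L * k + i" using \<open>L * k \<ge> k\<close> by linarith
    have "(f ^^ (L * k - k + i)) ((f ^^ k) c) = (f ^^ (L * k - k + i + k)) c" by (rule funpow_comb)
    also have "\<dots> = (f ^^ (L * k + i)) c" by (simp only: ar)
    also have "\<dots> = x" using funpow_period[OF assms(1)] i by simp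
    finally show "x \<in> orb f ((f ^^ k) c)" unfolding orb_def by (auto intro!: exI[of _ "L * k - k + i"])
  qed
qed

lemma orb_card:
  assumes "L > 0" "\<And>k. (f ^^ k) c = c \<longleftrightarrow> L dvd k"
  shows "card (orb f c) = L"
proof -
  have per: "(f ^^ L) c = c" using assms by simp
  have "orb f c = (\<lambda>k. (f ^^ k) c) ` {..<L}"
  proof (intro set_eqI iffI)
    fix x assume "x \<in> orb f c"
    then obtain k where k: "x = (f ^^ k) c" unfolding orb_def by auto
    have "(f ^^ k) c = (f ^^ (L * (k div L) + k mod L)) c" by simp
    also have "\<dots> = (f ^^ (k mod L)) c" by (rule funpow_period[OF per])
    finally show "x \<in> (\<lambda>k. (f ^^ k) c) ` {..<L}" using k assms(1) by auto
  qed (auto simp: orb_def)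
  moreover have "inj_on (\<lambda>k. (f ^^ k) c) {..<L}"
  proof (rule inj_onI)
    fix a b assume ab: "a \<in> {..<L}" "b \<in> {..<L}" "(f ^^ a) c = (f ^^ b) c"
    have gen: "a = b" if "a < b" "b < L" "(f ^^ a) c = (f ^^ b) c" for a b
    proof -
      have "(f ^^ (L - a)) ((f ^^ a) c) = (f ^^ (L - a)) ((f ^^ b) c)" using that by simp
      moreover have "(f ^^ (L - a)) ((f ^^ a) c) = (f ^^ L) c"
        using funpow_comb[where f=f and m="L - a" and k=a and c=c] that by simp
      moreover have "(f ^^ (L - a)) ((f ^^ b) c) = (f ^^ (L * 1 + (b - a))) c"
        using funpow_comb[where f=f and m="L - a" and k=b and c=c] that by simp
      ultimately have "(f ^^ (b - a)) c = c" using funpow_period[OF per, of 1 "b - a"] per by simp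
      hence "L dvd b - a" using assms(2) by simp
      moreover have "0 < b - a" "b - a < L" using that by auto
      ultimately show ?thesis by (simp add: nat_dvd_not_less)
    qed
    show "a = b"
    proof (rule ccontr)
      assume "a \<noteq> b"
      hence "a < b \<or> b < a" by arith
      thus False using gen[of a b] gen[of b a] ab \<open>a \<noteq> b\<close> by auto
    qed
  qed
  ultimately show ?thesis by (simp add: card_image)
qed

lemma orb_partition_card:
  assumes fin: "finite X" and L: "L > 0"
    and cl: "\<And>c k. c \<in> X \<Longrightarrow> (f ^^ k) c \<in> X"
    and per: "\<And>c k. c \<in> X \<Longrightarrow> (f ^^ k) c = c \<longleftrightarrow> L dvd k"
  shows "card X = L * card (orb f ` X)"
proof -
  have sub: "orb f c \<subseteq> X" if cX: "c \<in> X" for c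
  proof
    fix x assume "x \<in> orb f c"
    then obtain k where "x = (f ^^ k) c" unfolding orb_def by blast
    thus "x \<in> X" using cl[OF cX] by simp
  qed
  have U: "X = \<Union> (orb f ` X)"
  proof
    show "X \<subseteq> \<Union> (orb f ` X)" using orb_self by fast
    show "\<Union> (orb f ` X) \<subseteq> X" using sub by fast
  qed
  have disj: "pairwise disjnt (orb f ` X)"
  proof (rule pairwiseI)
    fix A B assume AB: "A \<in> orb f ` X" "B \<in> orb f ` X" "A \<noteq> B"
    then obtain a b where ab: "a \<in> X" "b \<in> X" "A = orb f a" "B = orb f b" by auto
    show "disjnt A B"
    proof (rule ccontr)
      assume "\<not> disjnt A B"
      then obtain y where y: "y \<in> orb f a" "y \<in> orb f b" unfolding disjnt_def ab by auto
      obtain i where "y = (f ^^ i) a" using y(1) unfolding orb_def by blast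
      moreover obtain j where "y = (f ^^ j) b" using y(2) unfolding orb_def by blast
      moreover have pa: "(f ^^ L) a = a" using per[OF ab(1)] by simp
      moreover have pb: "(f ^^ L) b = b" using per[OF ab(2)] by simp
      ultimately have "orb f a = orb f y" "orb f b = orb f y"
        using orb_eq[OF pa L, of i] orb_eq[OF pb L, of j] by simp_all
      thus False using AB(3) ab by simp
    qed
  qed
  have "card X = card (\<Union> (orb f ` X))" using U by simp
  also have "\<dots> = sum card (orb f ` X)"
  proof (rule card_Union_disjoint[OF disj])
    fix A assume "A \<in> orb f ` X"
    then obtain c where "c \<in> X" "A = orb f c" by blast
    thus "finite A" using finite_subset[OF sub fin] by simp
  qed
  also have "\<dots> = sum (\<lambda>_. L) (orb f ` X)"
  proof (rule sum.cong[OF refl])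
    fix Q assume "Q \<in> orb f ` X"
    then obtain c where "c \<in> X" "Q = orb f c" by auto
    thus "card Q = L" using orb_card[OF L per] by simp
  qed
  finally show ?thesis by simp
qed

lemma orb_weight:
  assumes fin: "finite X"
    and cl: "\<And>c k. c \<in> X \<Longrightarrow> (f ^^ k) c \<in> X"
    and per: "\<And>c. c \<in> X \<Longrightarrow> \<exists>L>0. (f ^^ L) c = c"
    and W: "\<And>c k. c \<in> X \<Longrightarrow> W ((f ^^ k) c) = W c"
  shows "card (W ` X) \<le> card (orb f ` X) \<and>
         (card (W ` X) = card (orb f ` X) \<longleftrightarrow>
           (\<forall>c1\<in>X. \<forall>c2\<in>X. W c1 = W c2 \<longrightarrow> (\<exists>k. (f ^^ k) c1 = c2)))"
proof -
  define wO where "wO Q = W (SOME x. x \<in> Q)" for Q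
  have wOc: "wO (orb f c) = W c" if "c \<in> X" for c
  proof -
    have "(SOME x. x \<in> orb f c) \<in> orb f c" using orb_self by (rule someI)
    then obtain k where "(SOME x. x \<in> orb f c) = (f ^^ k) c" unfolding orb_def by auto
    thus ?thesis unfolding wO_def using W[OF that] by simp
  qed
  have img: "W ` X = wO ` (orb f ` X)" using wOc by (auto simp: image_image)
  have fO: "finite (orb f ` X)" using fin by simp
  have same: "orb f c1 = orb f c2 \<longleftrightarrow> (\<exists>k. (f ^^ k) c1 = c2)" if c1X: "c1 \<in> X" and c2X: "c2 \<in> X" for c1 c2
  proof
    assume "orb f c1 = orb f c2"
    hence "c2 \<in> orb f c1" using orb_self[of c2 f] by simp
    thus "\<exists>k. (f ^^ k) c1 = c2" unfolding orb_def by auto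
  next
    assume "\<exists>k. (f ^^ k) c1 = c2"
    then obtain k where k: "(f ^^ k) c1 = c2" by auto
    obtain L where L: "L > 0" "(f ^^ L) c1 = c1" using per[OF c1X] by auto
    have "orb f ((f ^^ k) c1) = orb f c1" by (rule orb_eq[OF L(2) L(1)])
    thus "orb f c1 = orb f c2" using k by simp
  qed
  have "card (W ` X) \<le> card (orb f ` X)" unfolding img by (rule card_image_le[OF fO])
  moreover have "card (W ` X) = card (orb f ` X) \<longleftrightarrow> inj_on wO (orb f ` X)"
    unfolding img using inj_on_iff_eq_card[OF fO, of wO] by simp
  moreover have "inj_on wO (orb f ` X) \<longleftrightarrow>
      (\<forall>c1\<in>X. \<forall>c2\<in>X. W c1 = W c2 \<longrightarrow> (\<exists>k. (f ^^ k) c1 = c2))"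
  proof
    assume inj: "inj_on wO (orb f ` X)"
    show "\<forall>c1\<in>X. \<forall>c2\<in>X. W c1 = W c2 \<longrightarrow> (\<exists>k. (f ^^ k) c1 = c2)"
    proof (intro ballI impI)
      fix c1 c2 assume c: "c1 \<in> X" "c2 \<in> X" "W c1 = W c2"
      hence "wO (orb f c1) = wO (orb f c2)" using wOc by simp
      hence "orb f c1 = orb f c2" using inj c(1,2) unfolding inj_on_def by blast
      thus "\<exists>k. (f ^^ k) c1 = c2" using same[OF c(1,2)] by simp
    qed
  next
    assume H: "\<forall>c1\<in>X. \<forall>c2\<in>X. W c1 = W c2 \<longrightarrow> (\<exists>k. (f ^^ k) c1 = c2)"
    show "inj_on wO (orb f ` X)"
    proof (rule inj_onI)
      fix A B assume AB: "A \<in> orb f ` X" "B \<in> orb f ` X" "wO A = wO B"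
      then obtain a b where ab: "a \<in> X" "b \<in> X" "A = orb f a" "B = orb f b" by blast
      hence "W a = W b" using AB(3) wOc by simp
      hence "\<exists>k. (f ^^ k) a = b" using H ab(1,2) by blast
      thus "A = B" using same[OF ab(1,2)] ab(3,4) by simp
    qed
  qed
  ultimately show ?thesis by simp
qed



lemma NT:
  fixes t n k :: nat and A :: "nat set"
  assumes fin: "finite A" and ne: "A \<noteq> {}" and cop: "\<forall>a\<in>A. coprime a t"
  shows "(\<forall>a\<in>A. t * n dvd a * k) \<longleftrightarrow> t * n dvd Gcd (A \<union> {n}) * k"
proof -
  define G where "G = Gcd (A \<union> {n})"
  define G' where "G' = Gcd (A \<union> {t * n})"
  have GG: "G' = G"
  proof (rule dvd_antisym)
    show "G dvd G'" unfolding G'_def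
    proof (rule Gcd_greatest)
      fix b assume "b \<in> A \<union> {t * n}"
      thus "G dvd b" unfolding G_def
      proof
        assume "b \<in> A" thus "Gcd (A \<union> {n}) dvd b" by (intro Gcd_dvd) simp
      next
        assume "b \<in> {t * n}"
        hence "b = t * n" by simp
        moreover have "Gcd (A \<union> {n}) dvd n" by (intro Gcd_dvd) simp
        ultimately show "Gcd (A \<union> {n}) dvd b" by simp
      qed
    qed
    obtain a0 where a0: "a0 \<in> A" using ne by auto
    have "G' dvd a0" unfolding G'_def using a0 by (intro Gcd_dvd) simp
    hence cG: "coprime G' t" using cop a0 by (meson coprime_divisors dvd_refl)
    have "G' dvd t * n" unfolding G'_def by (intro Gcd_dvd) simp
    hence "G' dvd n" using cG by (simp add: coprime_dvd_mult_right_iff)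
    show "G' dvd G" unfolding G_def
    proof (rule Gcd_greatest)
      fix b assume "b \<in> A \<union> {n}"
      thus "G' dvd b"
      proof
        assume "b \<in> A" thus "G' dvd b" unfolding G'_def by (intro Gcd_dvd) simp
      qed (use \<open>G' dvd n\<close> in simp)
    qed
  qed
  show ?thesis
  proof
    assume H: "\<forall>a\<in>A. t * n dvd a * k"
    have "\<forall>x\<in>(*) k ` (A \<union> {t * n}). t * n dvd x" using H by (auto simp: mult.commute)
    hence "t * n dvd Gcd ((*) k ` (A \<union> {t * n}))" by (simp add: dvd_Gcd_iff)
    also have "Gcd ((*) k ` (A \<union> {t * n})) = k * G'" unfolding G'_def by (subst Gcd_mult) simp
    finally show "t * n dvd Gcd (A \<union> {n}) * k" using GG unfolding G_def by (simp add: mult.commute)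
  next
    assume H: "t * n dvd Gcd (A \<union> {n}) * k"
    show "\<forall>a\<in>A. t * n dvd a * k"
    proof
      fix a assume "a \<in> A"
      hence "Gcd (A \<union> {n}) dvd a" by (intro Gcd_dvd) simp
      hence "Gcd (A \<union> {n}) * k dvd a * k" by (rule mult_dvd_mono) simp
      thus "t * n dvd a * k" using H by (rule dvd_trans[rotated])
    qed
  qed
qed

context cst
begin

lemma rho_pow_nz: assumes "c mod M = c" "c \<noteq> 0" shows "(rho n lam ^^ k) c \<noteq> 0"
proof
  assume H: "(rho n lam ^^ k) c = 0"
  have "\<forall>h\<in>S. ev c h = 0"
  proof
    fix h assume h: "h \<in> S"
    have "z ^ (h * k) * ev c h = 0" using ev_rho_pow[OF h, of k c] H ev_0 by simp
    thus "ev c h = 0" using z_nz by simp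
  qed
  thus False using ev_inj[OF assms(1)] assms(2) by simp
qed

lemma per_j: assumes c: "c \<in> II j" "c \<noteq> 0"
  shows "(rho n lam ^^ k) c = c \<longleftrightarrow> (t * n) dvd aa j * k"
proof
  assume H: "(rho n lam ^^ k) c = c"
  obtain h where h: "h \<in> S" "ev c h \<noteq> 0" using ev_inj[OF II_R[OF c(1)]] c(2) by blast
  have hC: "h \<in> Cj j" using II_ev0[OF c(1) h(1)] h(2) by blast
  have "z ^ (h * k) * ev c h = ev c h" using ev_rho_pow[OF h(1), of k c] H by simp
  hence "z ^ (h * k) = 1" using h(2) by simp
  hence "(t * n) dvd h * k" using z_one_iff by simp
  thus "(t * n) dvd aa j * k" using Cs_dvd[OF hC] by simp
next
  assume H: "(t * n) dvd aa j * k"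
  define d where "d = (rho n lam ^^ k) c - c"
  have dR: "d mod M = d" unfolding d_def
    using rho_pow_R[OF II_R[OF c(1)], of k] II_R[OF c(1)] by (simp add: poly_mod_diff_left)
  have "\<forall>h\<in>S. ev d h = 0"
  proof
    fix h assume h: "h \<in> S"
    show "ev d h = 0"
    proof (cases "h \<in> Cj j")
      case True
      hence "z ^ (h * k) = 1" using Cs_dvd[OF True] H z_one_iff by simp
      thus ?thesis unfolding d_def using ev_rho_pow[OF h, of k c] by (simp add: ev_diff)
    next
      case False
      thus ?thesis unfolding d_def using ev_rho_pow[OF h, of k c] II_ev0[OF c(1) h False]
        by (simp add: ev_diff)
    qed
  qed
  hence "d = 0" using ev_inj[OF dR] by simp
  thus "(rho n lam ^^ k) c = c" unfolding d_def by simp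
qed

lemma uniq:
  assumes fin: "finite B'" and Bs: "\<forall>j\<in>B'. j \<le> s"
    and ff: "\<forall>j\<in>B'. f j \<in> II j \<and> f' j \<in> II j"
    and eq: "sum f B' = sum f' B'"
  shows "\<forall>j\<in>B'. f j = f' j"
proof
  fix k assume k: "k \<in> B'"
  have single: "ev (sum g B') h = ev (g k) h"
    if g: "\<forall>j\<in>B'. g j \<in> II j" and h: "h \<in> Cj k" for g h
  proof -
    have hS: "h \<in> S" using h Cj_sub_S by blast
    have "ev (sum g B') h = (\<Sum>j\<in>B'. ev (g j) h)" by (rule ev_sum)
    also have "\<dots> = ev (g k) h + (\<Sum>j\<in>B' - {k}. ev (g j) h)"
      by (rule sum.remove[OF fin k])
    also have "(\<Sum>j\<in>B' - {k}. ev (g j) h) = 0"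
    proof (rule sum.neutral, rule ballI)
      fix j assume j: "j \<in> B' - {k}"
      have "h \<notin> Cj j" using Cs_disj[of k j] Bs k j h by auto
      thus "ev (g j) h = 0" using II_ev0[of "g j" j h] g j hS by auto
    qed
    finally show ?thesis by simp
  qed
  define d where "d = f k - f' k"
  have "f k mod M = f k" "f' k mod M = f' k" using II_R ff k by auto
  hence dR: "d mod M = d" unfolding d_def by (simp add: poly_mod_diff_left)
  have "\<forall>h\<in>S. ev d h = 0"
  proof
    fix h assume h: "h \<in> S"
    show "ev d h = 0"
    proof (cases "h \<in> Cj k")
      case True
      thus ?thesis unfolding d_def using single[of f h] single[of f' h] ff eq by (simp add: ev_diff)
    next
      case False
      thus ?thesis unfolding d_def using II_ev0[OF _ h False] ff k by (simp add: ev_diff)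
    qed
  qed
  hence "d = 0" using ev_inj[OF dR] by simp
  thus "f k = f' k" unfolding d_def by simp
qed

lemma sum_R: "(\<forall>j\<in>A. f j mod M = f j) \<Longrightarrow> (sum f A) mod M = sum f A"
  by (induction A rule: infinite_finite_induct) (auto simp: poly_mod_add_left)

definition CG :: "nat set \<Rightarrow> 'a poly set" where
  "CG \<Gamma> = (\<lambda>f. sum f \<Gamma>) ` (PiE \<Gamma> (\<lambda>j. II j - {0}))"

definition GG :: "nat set \<Rightarrow> nat" where
  "GG \<Gamma> = Gcd (aa ` \<Gamma> \<union> {n})"

lemma GG_pos: "GG \<Gamma> > 0" unfolding GG_def using hn by (auto simp: Gcd_0_iff)

lemma GG_dvd: "GG \<Gamma> dvd t * n" unfolding GG_def by (simp add: Gcd_dvd)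

lemma CG_card:
  assumes Gs: "\<forall>j\<in>\<Gamma>. j \<le> s"
  shows "card (CG \<Gamma>) = (\<Prod>j\<in>\<Gamma>. q ^ dj q t n j - 1)"
proof -
  have fin: "finite \<Gamma>" using Gs finite_subset[of \<Gamma> "{..s}"] by auto
  have "inj_on (\<lambda>f. sum f \<Gamma>) (PiE \<Gamma> (\<lambda>j. II j - {0}))"
  proof (rule inj_onI)
    fix f f' assume ff: "f \<in> PiE \<Gamma> (\<lambda>j. II j - {0})" "f' \<in> PiE \<Gamma> (\<lambda>j. II j - {0})"
      "sum f \<Gamma> = sum f' \<Gamma>"
    have "\<forall>j\<in>\<Gamma>. f j = f' j"
      by (rule uniq[OF fin Gs _ ff(3)]) (use ff(1,2) in \<open>auto simp: PiE_def Pi_def\<close>)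
    thus "f = f'" using ff(1,2) by (auto intro: PiE_ext)
  qed
  hence "card (CG \<Gamma>) = card (PiE \<Gamma> (\<lambda>j. II j - {0}))" unfolding CG_def by (rule card_image)
  also have "\<dots> = (\<Prod>j\<in>\<Gamma>. card (II j - {0}))" by (rule card_PiE[OF fin])
  also have "\<dots> = (\<Prod>j\<in>\<Gamma>. q ^ dj q t n j - 1)"
    by (rule prod.cong[OF refl]) (simp add: card_Diff_singleton II_finite II_0 II_card)
  finally show ?thesis .
qed

lemma CG_elem:
  assumes "c \<in> CG \<Gamma>"
  obtains f where "f \<in> PiE \<Gamma> (\<lambda>j. II j - {0})" "c = sum f \<Gamma>"
  using assms unfolding CG_def by auto

lemma CG_R: assumes "c \<in> CG \<Gamma>" shows "c mod M = c"
proof -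
  obtain f where f: "f \<in> PiE \<Gamma> (\<lambda>j. II j - {0})" "c = sum f \<Gamma>" using CG_elem[OF assms] .
  show ?thesis unfolding f(2) by (rule sum_R) (use f(1) II_R in \<open>auto simp: PiE_def Pi_def\<close>)
qed

lemma CG_rho: assumes Gs: "\<forall>j\<in>\<Gamma>. j \<le> s" and c: "c \<in> CG \<Gamma>"
  shows "(rho n lam ^^ k) c \<in> CG \<Gamma>"
proof -
  obtain f where f: "f \<in> PiE \<Gamma> (\<lambda>j. II j - {0})" "c = sum f \<Gamma>" using CG_elem[OF c] .
  define f' where "f' = restrict (\<lambda>j. (rho n lam ^^ k) (f j)) \<Gamma>"
  have "f' \<in> PiE \<Gamma> (\<lambda>j. II j - {0})"
    unfolding f'_def using f(1) II_rho_pow rho_pow_nz II_R by (auto simp: PiE_def Pi_def)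
  moreover have "(rho n lam ^^ k) c = sum f' \<Gamma>" unfolding f(2) f'_def rho_pow_sum by simp
  ultimately show ?thesis unfolding CG_def by blast
qed

lemma CG_per: assumes Gs: "\<forall>j\<in>\<Gamma>. j \<le> s" and ne: "\<Gamma> \<noteq> {}" and c: "c \<in> CG \<Gamma>"
  shows "(rho n lam ^^ k) c = c \<longleftrightarrow> ((t * n) div GG \<Gamma>) dvd k"
proof -
  have fin: "finite \<Gamma>" using Gs finite_subset[of \<Gamma> "{..s}"] by auto
  obtain f where f: "f \<in> PiE \<Gamma> (\<lambda>j. II j - {0})" "c = sum f \<Gamma>" using CG_elem[OF c] .
  have fI: "\<forall>j\<in>\<Gamma>. f j \<in> II j \<and> f j \<noteq> 0" using f(1) by (auto simp: PiE_def Pi_def)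
  have "(rho n lam ^^ k) c = c \<longleftrightarrow> (\<forall>j\<in>\<Gamma>. (rho n lam ^^ k) (f j) = f j)"
  proof
    assume "(rho n lam ^^ k) c = c"
    hence "sum (\<lambda>j. (rho n lam ^^ k) (f j)) \<Gamma> = sum f \<Gamma>" unfolding f(2) rho_pow_sum .
    thus "\<forall>j\<in>\<Gamma>. (rho n lam ^^ k) (f j) = f j"
      by (rule uniq[OF fin Gs, rotated]) (use fI II_rho_pow in blast)
  next
    assume "\<forall>j\<in>\<Gamma>. (rho n lam ^^ k) (f j) = f j"
    thus "(rho n lam ^^ k) c = c" unfolding f(2) rho_pow_sum by simp
  qed
  also have "\<dots> \<longleftrightarrow> (\<forall>j\<in>\<Gamma>. t * n dvd aa j * k)"
  proof (rule ball_cong[OF refl])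
    fix j assume "j \<in> \<Gamma>"
    thus "(rho n lam ^^ k) (f j) = f j \<longleftrightarrow> t * n dvd aa j * k" using fI by (intro per_j) auto
  qed
  also have "\<dots> \<longleftrightarrow> (\<forall>a\<in>aa ` \<Gamma>. t * n dvd a * k)" by simp
  also have "\<dots> \<longleftrightarrow> t * n dvd GG \<Gamma> * k" unfolding GG_def
    by (rule NT) (use fin ne coprime_aa in auto)
  also have "\<dots> \<longleftrightarrow> ((t * n) div GG \<Gamma>) dvd k"
  proof -
    obtain L where L: "t * n = GG \<Gamma> * L" using GG_dvd[of \<Gamma>] by (elim dvdE)
    have "(t * n) div GG \<Gamma> = L" using L GG_pos by simp
    thus ?thesis using L GG_pos by (simp add: mult.commute)
  qed
  finally show ?thesis .
qed

end


context cst
begin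

lemma hw_rho: assumes cR: "c mod M = c" shows "hweight (rho n lam c) = hweight c"
proof -
  define a where "a = coeff c (n - 1)"
  define r where "r = monom 1 1 * c - smult a M"
  have c0: "coeff c i = 0" if "i \<ge> n" for i
  proof (cases "c = 0")
    case False
    thus ?thesis using Rring_deg[OF cR False] that by (intro coeff_eq_0) simp
  qed simp
  have cM: "coeff M i = (if i = n then 1 else 0) - (if i = 0 then lam else 0)" for i
    unfolding modpoly_def by (auto simp: coeff_monom coeff_pCons split: nat.split)
  have cr: "coeff r i = (if i < 1 then 0 else coeff c (i - 1))
      - a * ((if i = n then 1 else 0) - (if i = 0 then lam else 0))" for i
    unfolding r_def by (simp add: coeff_monom_mult cM)
  have cr0: "coeff r 0 = a * lam" using cr[of 0] hn by simp
  have crS: "coeff r (Suc i) = coeff c i" if "Suc i < n" for i using cr[of "Suc i"] that by simp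
  have crn: "coeff r i = 0" if "i \<ge> n" for i
  proof (cases "i = n")
    case True thus ?thesis using cr[of i] hn unfolding a_def by simp
  next
    case False
    hence "i - 1 \<ge> n" "i \<noteq> 0" using that hn by auto
    thus ?thesis using cr[of i] c0[of "i - 1"] False by simp
  qed
  have rdeg: "degree r < n"
  proof -
    have "degree r \<le> n - 1" by (rule degree_le) (use crn in auto)
    thus ?thesis using hn by simp
  qed
  have "rho n lam c = r"
  proof -
    have "monom 1 1 * c = r + smult a M" unfolding r_def by simp
    hence "rho n lam c = (r + smult a M) mod M" unfolding rho_def by simp
    also have "\<dots> = r mod M + smult a M mod M" by (rule poly_mod_add_left)
    also have "smult a M mod M = 0" by (simp add: dvd_smult)
    also have "r mod M = r" using rdeg deg_M by (intro mod_poly_less) simp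
    finally show ?thesis by simp
  qed
  moreover have "hweight r = hweight c"
  proof -
    define sg where "sg i = (if i = n - 1 then 0 else Suc i)" for i
    let ?Sc = "{i. coeff c i \<noteq> 0}"
    let ?Sr = "{i. coeff r i \<noteq> 0}"
    have Scn: "?Sc \<subseteq> {..<n}" using c0 by (auto simp: not_less[symmetric])
    have "?Sr = sg ` ?Sc"
    proof (intro set_eqI iffI)
      fix j assume j: "j \<in> ?Sr"
      hence jn: "j < n" using crn by (metis mem_Collect_eq not_less)
      show "j \<in> sg ` ?Sc"
      proof (cases j)
        case 0
        hence "a \<noteq> 0" using j cr0 by auto
        hence "n - 1 \<in> ?Sc" unfolding a_def by simp
        moreover have "sg (n - 1) = j" using 0 unfolding sg_def by simp
        ultimately show ?thesis by blast
      next
        case (Suc i)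
        hence "coeff c i \<noteq> 0" using j crS jn by auto
        moreover have "sg i = j" using Suc jn unfolding sg_def by auto
        ultimately show ?thesis by blast
      qed
    next
      fix j assume "j \<in> sg ` ?Sc"
      then obtain i where i: "i \<in> ?Sc" "j = sg i" by auto
      have "i < n" using i(1) Scn by auto
      show "j \<in> ?Sr"
      proof (cases "i = n - 1")
        case True
        hence "j = 0" "a \<noteq> 0" using i unfolding sg_def a_def by auto
        thus ?thesis using cr0 hlam by simp
      next
        case False
        hence "j = Suc i" "Suc i < n" using i \<open>i < n\<close> unfolding sg_def by auto
        thus ?thesis using crS i(1) by simp
      qed
    qed
    moreover have "inj_on sg ?Sc"
    proof (rule inj_onI)
      fix x y assume xy: "x \<in> ?Sc" "y \<in> ?Sc" "sg x = sg y"
      hence "x < n" "y < n" using Scn by auto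
      thus "x = y" using xy(3) unfolding sg_def by (auto split: if_splits)
    qed
    ultimately show ?thesis unfolding hweight_def by (simp add: card_image)
  qed
  ultimately show ?thesis by simp
qed

lemma hw_rho_pow: "c mod M = c \<Longrightarrow> hweight ((rho n lam ^^ k) c) = hweight c"
proof (induction k)
  case (Suc k)
  have "(rho n lam ^^ k) c mod M = (rho n lam ^^ k) c" by (rule rho_pow_R[OF Suc.prems])
  thus ?case using Suc hw_rho by simp
qed simp

lemma ext_fun:
  assumes f: "f \<in> PiE \<Gamma> (\<lambda>j. II j - {0})"
  shows "(\<forall>j\<in>B. (\<lambda>j. if j \<in> \<Gamma> then f j else 0) j \<in> II j)
       \<and> (finite B \<longrightarrow> \<Gamma> \<subseteq> B \<longrightarrow> sum (\<lambda>j. if j \<in> \<Gamma> then f j else 0) B = sum f \<Gamma>)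
       \<and> (\<forall>j. (\<lambda>j. if j \<in> \<Gamma> then f j else 0) j \<noteq> 0 \<longleftrightarrow> j \<in> \<Gamma>)"
proof (intro conjI impI allI ballI)
  fix j show "(\<lambda>j. if j \<in> \<Gamma> then f j else 0) j \<in> II j"
    using f II_0 by (auto simp: PiE_def Pi_def)
next
  fix j show "((\<lambda>j. if j \<in> \<Gamma> then f j else 0) j \<noteq> 0) = (j \<in> \<Gamma>)"
    using f by (auto simp: PiE_def Pi_def)
next
  assume "finite B" "\<Gamma> \<subseteq> B"
  have "sum (\<lambda>j. if j \<in> \<Gamma> then f j else 0) B = sum (\<lambda>j. if j \<in> \<Gamma> then f j else 0) \<Gamma>"
    by (rule sum.mono_neutral_right) (use \<open>finite B\<close> \<open>\<Gamma> \<subseteq> B\<close> in auto)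
  also have "\<dots> = sum f \<Gamma>" by (rule sum.cong) auto
  finally show "sum (\<lambda>j. if j \<in> \<Gamma> then f j else 0) B = sum f \<Gamma>" .
qed

lemma code_decomp:
  assumes hB: "B \<subseteq> {0..s}"
  shows "code e q t n lam z B - {0} = \<Union> (CG ` {\<Gamma>. \<Gamma> \<subseteq> B \<and> \<Gamma> \<noteq> {}})"
proof -
  have finB: "finite B" using hB finite_subset by blast
  have Bs: "\<forall>j\<in>B. j \<le> s" using hB by auto
  show ?thesis
  proof (intro set_eqI iffI)
    fix x assume x: "x \<in> code e q t n lam z B - {0}"
    then obtain cf where cf: "\<forall>j\<in>B. cf j \<in> II j" "x = sum cf B" unfolding code_def by auto
    define \<Gamma> where "\<Gamma> = {j\<in>B. cf j \<noteq> 0}"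
    have GB: "\<Gamma> \<subseteq> B" unfolding \<Gamma>_def by auto
    have xs: "x = sum cf \<Gamma>" unfolding cf(2) \<Gamma>_def
      by (rule sum.mono_neutral_right) (use finB in auto)
    have "\<Gamma> \<noteq> {}" using xs x by auto
    moreover have "restrict cf \<Gamma> \<in> PiE \<Gamma> (\<lambda>j. II j - {0})"
      using cf(1) unfolding \<Gamma>_def by auto
    moreover have "sum (restrict cf \<Gamma>) \<Gamma> = x" unfolding xs by (rule sum.cong) auto
    ultimately have "x \<in> CG \<Gamma>" unfolding CG_def by (intro image_eqI[where x="restrict cf \<Gamma>"]) simp_all
    moreover have "\<Gamma> \<in> {\<Gamma>. \<Gamma> \<subseteq> B \<and> \<Gamma> \<noteq> {}}" using GB \<open>\<Gamma> \<noteq> {}\<close> by simp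
    ultimately show "x \<in> \<Union> (CG ` {\<Gamma>. \<Gamma> \<subseteq> B \<and> \<Gamma> \<noteq> {}})" by blast
  next
    fix x assume "x \<in> \<Union> (CG ` {\<Gamma>. \<Gamma> \<subseteq> B \<and> \<Gamma> \<noteq> {}})"
    then obtain \<Gamma> where G: "\<Gamma> \<subseteq> B" "\<Gamma> \<noteq> {}" "x \<in> CG \<Gamma>" by auto
    obtain f where f: "f \<in> PiE \<Gamma> (\<lambda>j. II j - {0})" "x = sum f \<Gamma>" using CG_elem[OF G(3)] .
    define cf where "cf = (\<lambda>j. if j \<in> \<Gamma> then f j else 0)"
    have E: "\<forall>j\<in>B. cf j \<in> II j" "sum cf B = x" "\<forall>j. cf j \<noteq> 0 \<longleftrightarrow> j \<in> \<Gamma>"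
      using ext_fun[OF f(1), of B] finB G(1) f(2) unfolding cf_def by auto
    have "x \<in> code e q t n lam z B" unfolding code_def using E(1,2) by blast
    moreover have "x \<noteq> 0"
    proof
      assume "x = 0"
      hence "sum cf B = sum (\<lambda>_. 0) B" using E(2) by simp
      hence "\<forall>j\<in>B. cf j = 0" using uniq[OF finB Bs, of cf "\<lambda>_. 0"] E(1) II_0 by auto
      thus False using E(3) G(1,2) by auto
    qed
    ultimately show "x \<in> code e q t n lam z B - {0}" by simp
  qed
qed

lemma CG_disj:
  assumes hB: "B \<subseteq> {0..s}" and G: "\<Gamma> \<subseteq> B" "\<Gamma>' \<subseteq> B" "\<Gamma> \<noteq> \<Gamma>'"
  shows "CG \<Gamma> \<inter> CG \<Gamma>' = {}"
proof (rule ccontr)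
  have finB: "finite B" using hB finite_subset by blast
  have Bs: "\<forall>j\<in>B. j \<le> s" using hB by auto
  assume "CG \<Gamma> \<inter> CG \<Gamma>' \<noteq> {}"
  then obtain x where x: "x \<in> CG \<Gamma>" "x \<in> CG \<Gamma>'" by auto
  obtain f where f: "f \<in> PiE \<Gamma> (\<lambda>j. II j - {0})" "x = sum f \<Gamma>" using CG_elem[OF x(1)] .
  obtain f' where f': "f' \<in> PiE \<Gamma>' (\<lambda>j. II j - {0})" "x = sum f' \<Gamma>'" using CG_elem[OF x(2)] .
  define cf where "cf = (\<lambda>j. if j \<in> \<Gamma> then f j else 0)"
  define cf' where "cf' = (\<lambda>j. if j \<in> \<Gamma>' then f' j else 0)"
  have E: "\<forall>j\<in>B. cf j \<in> II j" "sum cf B = x" "\<forall>j. cf j \<noteq> 0 \<longleftrightarrow> j \<in> \<Gamma>"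
    using ext_fun[OF f(1), of B] finB G(1) f(2) unfolding cf_def by auto
  have E': "\<forall>j\<in>B. cf' j \<in> II j" "sum cf' B = x" "\<forall>j. cf' j \<noteq> 0 \<longleftrightarrow> j \<in> \<Gamma>'"
    using ext_fun[OF f'(1), of B] finB G(2) f'(2) unfolding cf'_def by auto
  have "\<forall>j\<in>B. cf j = cf' j" using uniq[OF finB Bs, of cf cf'] E E' by auto
  have "\<Gamma> = \<Gamma>'"
  proof (intro set_eqI iffI)
    fix j assume "j \<in> \<Gamma>"
    hence "j \<in> B" "cf j \<noteq> 0" using E(3) G(1) by auto
    thus "j \<in> \<Gamma>'" using \<open>\<forall>j\<in>B. cf j = cf' j\<close> E'(3) by metis
  next
    fix j assume "j \<in> \<Gamma>'"
    hence "j \<in> B" "cf' j \<noteq> 0" using E'(3) G(2) by auto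
    thus "j \<in> \<Gamma>" using \<open>\<forall>j\<in>B. cf j = cf' j\<close> E(3) by metis
  qed
  thus False using G(3) by simp
qed

lemma orb_rho: "rho_orbit n lam = orb (rho n lam)"
  unfolding rho_orbit_def orb_def by (rule ext) simp

lemma main:
  assumes hB: "B \<subseteq> {0..s}"
  shows "real (num_orbits n lam (code e q t n lam z B - {0})) =
           (\<Sum>\<Gamma>\<in>{\<Gamma>. \<Gamma> \<subseteq> B \<and> \<Gamma> \<noteq> {}}.
              real ((\<Prod>j\<in>\<Gamma>. q ^ dj q t n j - 1) *
                    Gcd ((\<lambda>j. 1 + t * alpha q t n j) ` \<Gamma> \<union> {n}))
              / real (t * n))
         \<and> card (hweight ` (code e q t n lam z B - {0}))
             \<le> num_orbits n lam (code e q t n lam z B - {0})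
         \<and> (card (hweight ` (code e q t n lam z B - {0}))
               = num_orbits n lam (code e q t n lam z B - {0})
             \<longleftrightarrow> (\<forall>c1\<in>code e q t n lam z B - {0}. \<forall>c2\<in>code e q t n lam z B - {0}.
                   hweight c1 = hweight c2 \<longrightarrow> (\<exists>k. (rho n lam ^^ k) c1 = c2)))"
proof -
  define Gs where "Gs = {\<Gamma>. \<Gamma> \<subseteq> B \<and> \<Gamma> \<noteq> {}}"
  define X where "X = code e q t n lam z B - {0}"
  let ?f = "rho n lam"
  have finB: "finite B" using hB finite_subset by blast
  have finGs: "finite Gs" unfolding Gs_def using finB by (auto intro: finite_subset[of _ "Pow B"])
  have Gsj: "\<forall>j\<in>\<Gamma>. j \<le> s" if "\<Gamma> \<in> Gs" for \<Gamma> using that hB unfolding Gs_def by auto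
  have Gsne: "\<Gamma> \<noteq> {}" if "\<Gamma> \<in> Gs" for \<Gamma> using that unfolding Gs_def by auto
  have finG: "finite \<Gamma>" if "\<Gamma> \<in> Gs" for \<Gamma> using that finB finite_subset unfolding Gs_def by auto
  have finCG: "finite (CG \<Gamma>)" if "\<Gamma> \<in> Gs" for \<Gamma>
    unfolding CG_def using finG[OF that] II_finite by (intro finite_imageI finite_PiE) auto
  have XU: "X = \<Union> (CG ` Gs)" unfolding X_def Gs_def by (rule code_decomp[OF hB])
  define L where "L \<Gamma> = (t * n) div GG \<Gamma>" for \<Gamma>
  have LG: "L \<Gamma> * GG \<Gamma> = t * n" for \<Gamma> unfolding L_def using GG_dvd[of \<Gamma>] by simp
  have Lpos: "L \<Gamma> > 0" for \<Gamma> using LG[of \<Gamma>] N_pos by (cases "L \<Gamma> = 0") auto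
  have per: "(?f ^^ k) c = c \<longleftrightarrow> L \<Gamma> dvd k" if "\<Gamma> \<in> Gs" "c \<in> CG \<Gamma>" for \<Gamma> c k
    unfolding L_def using CG_per[OF Gsj[OF that(1)] Gsne[OF that(1)] that(2)] .
  have cl: "(?f ^^ k) c \<in> CG \<Gamma>" if "\<Gamma> \<in> Gs" "c \<in> CG \<Gamma>" for \<Gamma> c k
    using CG_rho[OF Gsj[OF that(1)] that(2)] .
  have orbsub: "orb ?f c \<subseteq> CG \<Gamma>" if "\<Gamma> \<in> Gs" "c \<in> CG \<Gamma>" for \<Gamma> c
    using cl[OF that] unfolding orb_def by auto
  have cnt: "real (card (orb ?f ` CG \<Gamma>)) =
      real ((\<Prod>j\<in>\<Gamma>. q ^ dj q t n j - 1) * GG \<Gamma>) / real (t * n)" if G: "\<Gamma> \<in> Gs" for \<Gamma>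
  proof -
    have "card (CG \<Gamma>) = L \<Gamma> * card (orb ?f ` CG \<Gamma>)"
      by (rule orb_partition_card[OF finCG[OF G] Lpos]) (use cl[OF G] per[OF G] in auto)
    hence "(\<Prod>j\<in>\<Gamma>. q ^ dj q t n j - 1) * GG \<Gamma> = t * n * card (orb ?f ` CG \<Gamma>)"
      using CG_card[OF Gsj[OF G]] LG[of \<Gamma>] by (simp add: ac_simps)
    hence "real ((\<Prod>j\<in>\<Gamma>. q ^ dj q t n j - 1) * GG \<Gamma>) = real (t * n) * real (card (orb ?f ` CG \<Gamma>))"
      by (simp only: of_nat_mult[symmetric])
    thus ?thesis using N_pos by (simp add: field_simps)
  qed
  have part1: "real (num_orbits n lam X) =
      (\<Sum>\<Gamma>\<in>Gs. real ((\<Prod>j\<in>\<Gamma>. q ^ dj q t n j - 1) * GG \<Gamma>) / real (t * n))"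
  proof -
    have "num_orbits n lam X = card (\<Union>\<Gamma>\<in>Gs. orb ?f ` CG \<Gamma>)"
      unfolding num_orbits_def orb_rho XU by (simp add: image_UN)
    also have "\<dots> = (\<Sum>\<Gamma>\<in>Gs. card (orb ?f ` CG \<Gamma>))"
    proof (rule card_UN_disjoint[OF finGs])
      show "\<forall>\<Gamma>\<in>Gs. finite (orb ?f ` CG \<Gamma>)" using finCG by auto
      show "\<forall>\<Gamma>\<in>Gs. \<forall>\<Gamma>'\<in>Gs. \<Gamma> \<noteq> \<Gamma>' \<longrightarrow> orb ?f ` CG \<Gamma> \<inter> orb ?f ` CG \<Gamma>' = {}"
      proof (intro ballI impI)
        fix \<Gamma> \<Gamma>' assume GG': "\<Gamma> \<in> Gs" "\<Gamma>' \<in> Gs" "\<Gamma> \<noteq> \<Gamma>'"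
        show "orb ?f ` CG \<Gamma> \<inter> orb ?f ` CG \<Gamma>' = {}"
        proof (rule ccontr)
          assume "orb ?f ` CG \<Gamma> \<inter> orb ?f ` CG \<Gamma>' \<noteq> {}"
          then obtain c c' where cc: "c \<in> CG \<Gamma>" "c' \<in> CG \<Gamma>'" "orb ?f c = orb ?f c'" by blast
          have "c \<in> orb ?f c'" using orb_self[of c ?f] cc(3) by simp
          hence "c \<in> CG \<Gamma>'" using orbsub[OF GG'(2) cc(2)] by blast
          moreover have "CG \<Gamma> \<inter> CG \<Gamma>' = {}"
            using CG_disj[OF hB] GG' unfolding Gs_def by auto
          ultimately show False using cc(1) by blast
        qed
      qed
    qed
    finally show ?thesis by (simp add: cnt)
  qed
  have part2: "card (hweight ` X) \<le> card (orb ?f ` X) \<and>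
         (card (hweight ` X) = card (orb ?f ` X) \<longleftrightarrow>
           (\<forall>c1\<in>X. \<forall>c2\<in>X. hweight c1 = hweight c2 \<longrightarrow> (\<exists>k. (?f ^^ k) c1 = c2)))"
  proof (rule orb_weight)
    show "finite X" unfolding XU using finGs finCG by auto
    show "(?f ^^ k) c \<in> X" if "c \<in> X" for c k using that cl unfolding XU by blast
    show "\<exists>L>0. (?f ^^ L) c = c" if cX: "c \<in> X" for c
    proof -
      obtain \<Gamma> where G: "\<Gamma> \<in> Gs" "c \<in> CG \<Gamma>" using cX unfolding XU by blast
      thus ?thesis using per[OF G, of "L \<Gamma>"] Lpos[of \<Gamma>] by auto
    qed
    show "hweight ((?f ^^ k) c) = hweight c" if cX: "c \<in> X" for c k
    proof -
      obtain \<Gamma> where G: "\<Gamma> \<in> Gs" "c \<in> CG \<Gamma>" using cX unfolding XU by blast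
      thus ?thesis using hw_rho_pow[OF CG_R[OF G(2)]] by simp
    qed
  qed
  show ?thesis using part1 part2 unfolding X_def Gs_def num_orbits_def orb_rho GG_def by simp
qed

end


theorem theorem1:
  fixes lam :: "'a::{finite,field}"
    and e :: "'a \<Rightarrow> 'b::{finite,field}"
    and z :: 'b
    and q n t :: nat
    and B :: "nat set"
  assumes hq: "q = CARD('a)"
    and hn: "0 < n" and hcop: "coprime n q"
    and hlam: "lam \<noteq> 0" and ht: "t = mult_ord lam"
    and he: "is_field_emb e"
    and hz: "prim_root (t * n) z" and hzn: "z ^ n = e lam"
    and hB: "B \<subseteq> {0..s_idx q t n}"
  shows "real (num_orbits n lam (code e q t n lam z B - {0})) =
           (\<Sum>\<Gamma>\<in>{\<Gamma>. \<Gamma> \<subseteq> B \<and> \<Gamma> \<noteq> {}}.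
              real ((\<Prod>j\<in>\<Gamma>. q ^ dj q t n j - 1) *
                    Gcd ((\<lambda>j. 1 + t * alpha q t n j) ` \<Gamma> \<union> {n}))
              / real (t * n))
         \<and> card (hweight ` (code e q t n lam z B - {0}))
             \<le> num_orbits n lam (code e q t n lam z B - {0})
         \<and> (card (hweight ` (code e q t n lam z B - {0}))
               = num_orbits n lam (code e q t n lam z B - {0})
             \<longleftrightarrow> (\<forall>c1\<in>code e q t n lam z B - {0}. \<forall>c2\<in>code e q t n lam z B - {0}.
                   hweight c1 = hweight c2 \<longrightarrow> (\<exists>k. (rho n lam ^^ k) c1 = c2)))"
proof -
  interpret cst lam e z q n t
    by (unfold_locales) (rule hq hn hcop hlam ht he hz hzn)+
  show ?thesis by (rule main[OF hB])
qed

end
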